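(* (i) $\mathrm{tr}(t_1u)$ is a highest weight vector in the $\mathrm{GL}_3(K)$-module $C_2$ generating a submodule isomorphic to $W_3(1)$. (ii) $\mathrm{tr}(t_1t_2u)$ is a highest weight vector in $C_2$ generating a submodule isomorphic to $W_3(1,1)$. (iii) $\mathrm{tr}(t_1^2s)$ is a highest weight vector in the $\mathrm{GL}_3(K)$-module $C_3$ generating a submodule isomorphic to $W_3(2)$. (iv) $\mathrm{tr}([t_1^2,t_2]s)$ is a highest weight vector in $C_3$ generating a submodule isomorphic to $W_3(2,1)$.
   Context: $K$ is a field of characteristic $0$; $so_3(K)$ is the space of $3\times 3$ skew-symmetric matrices. $T_3=\{t^{(k)}_{ij}\mid1\le i<j\le3,\ k=1,2,3\}$ are commuting indeterminates, $t_k$ the generic skew-symmetric matrix with $(i,j)$ entry $t^{(k)}_{ij}$, $(j,i)$ entry $-t^{(k)}_{ij}$ ($i<j$). $Z=\{z_{ij}\mid 1\le i,j\le 3\}$ are further indeterminates, $K[T_3,Z]$ the coordinate ring of $so_3(K)^{\oplus 3}\oplus M_3(K)$ with $\mathrm{SO}_3(K)$ acting by simultaneous conjugation. Let $u_{ij}=\frac12(z_{ij}-z_{ji})$ ($i<j$), $s_{ij}=\frac12(z_{ij}+z_{ji})$ ($i\le j$), $s_{kk}=z_{kk}-\frac13(z_{11}+z_{22}+z_{33})$; $u$ is the skew-symmetric matrix with entries $u_{ij}$ above the diagonal, $s$ the symmetric trace-zero matrix with entries $s_{ij}$ on and above the diagonal. $C_2$ (resp. $C_3$) is the space of $\mathrm{SO}_3(K)$-invariant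 polynomials in $K[T_3][u_{ij}]$ (resp. $K[T_3][s_{ij}]$) of total degree one in the $u_{ij}$ (resp. $s_{ij}$). $\mathrm{GL}_3(K)$ acts by $g\cdot t^{(k)}_{ij}=\sum_l g_{lk}t^{(l)}_{ij}$, fixing the $z_{ij}$. A highest weight vector of weight $\lambda$ is a nonzero element multihomogeneous of degree $\lambda$ in the entries of $(t_1,t_2,t_3)$ and fixed by the unipotent upper triangular matrices. $W_3(\lambda)$ is the irreducible polynomial $\mathrm{GL}_3(K)$-module indexed by $\lambda$; $[a,b]=ab-ba$. *)

theory Defs
  imports Main
begin

text \<open>Points of so_3(K)^3 (+) M_3(K) are given by raw coordinates:
  T k i j = t^(k)_ij (meaningful for k in {1,2,3}, 1 <= i < j <= 3) and Z i j = z_ij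
  (1 <= i,j <= 3).  Elements of K[T_3,Z] are modelled as polynomial functions of these
  coordinates (faithful since K has characteristic 0, hence is infinite).\<close>

type_synonym 'k tcoords = "nat \<Rightarrow> nat \<Rightarrow> nat \<Rightarrow> 'k"
type_synonym 'k zcoords = "nat \<Rightarrow> nat \<Rightarrow> 'k"
type_synonym 'k fn = "'k tcoords \<Rightarrow> 'k zcoords \<Rightarrow> 'k"

inductive_set polyT :: "('k::comm_ring_1 tcoords \<Rightarrow> 'k) set" where
  const: "(\<lambda>T. c) \<in> polyT"
| tvar: "k \<in> {1..3} \<Longrightarrow> 1 \<le> i \<Longrightarrow> i < j \<Longrightarrow> j \<le> 3 \<Longrightarrow> (\<lambda>T. T k i j) \<in> polyT"
| add: "p \<in> polyT \<Longrightarrow> q \<in> polyT \<Longrightarrow> (\<lambda>T. p T + q T) \<in> polyT"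
| mult: "p \<in> polyT \<Longrightarrow> q \<in> polyT \<Longrightarrow> (\<lambda>T. p T * q T) \<in> polyT"

definition mm :: "(nat \<Rightarrow> nat \<Rightarrow> 'k::comm_ring_1) \<Rightarrow> (nat \<Rightarrow> nat \<Rightarrow> 'k) \<Rightarrow> nat \<Rightarrow> nat \<Rightarrow> 'k" where
  "mm A B i j = (\<Sum>l = 1..3. A i l * B l j)"

definition msub :: "(nat \<Rightarrow> nat \<Rightarrow> 'k::comm_ring_1) \<Rightarrow> (nat \<Rightarrow> nat \<Rightarrow> 'k) \<Rightarrow> nat \<Rightarrow> nat \<Rightarrow> 'k" where
  "msub A B i j = A i j - B i j"

definition mcomm :: "(nat \<Rightarrow> nat \<Rightarrow> 'k::comm_ring_1) \<Rightarrow> (nat \<Rightarrow> nat \<Rightarrow> 'k) \<Rightarrow> nat \<Rightarrow> nat \<Rightarrow> 'k" where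
  "mcomm A B = msub (mm A B) (mm B A)"

definition mtr :: "(nat \<Rightarrow> nat \<Rightarrow> 'k::comm_ring_1) \<Rightarrow> 'k" where
  "mtr A = (\<Sum>i = 1..3. A i i)"

definition det3 :: "(nat \<Rightarrow> nat \<Rightarrow> 'k::comm_ring_1) \<Rightarrow> 'k" where
  "det3 g = g 1 1 * (g 2 2 * g 3 3 - g 2 3 * g 3 2)
          - g 1 2 * (g 2 1 * g 3 3 - g 2 3 * g 3 1)
          + g 1 3 * (g 2 1 * g 3 2 - g 2 2 * g 3 1)"

definition tmat :: "'k::comm_ring_1 tcoords \<Rightarrow> nat \<Rightarrow> nat \<Rightarrow> nat \<Rightarrow> 'k" where
  "tmat T k i j = (if i < j then T k i j else if j < i then - T k j i else 0)"

definition umat :: "'k::field_char_0 zcoords \<Rightarrow> nat \<Rightarrow> nat \<Rightarrow> 'k" where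
  "umat Z i j = (if i < j then (Z i j - Z j i) / 2
                 else if j < i then - ((Z j i - Z i j) / 2) else 0)"

definition smat :: "'k::field_char_0 zcoords \<Rightarrow> nat \<Rightarrow> nat \<Rightarrow> 'k" where
  "smat Z i j = (if i = j then Z i i - (Z 1 1 + Z 2 2 + Z 3 3) / 3
                 else if i < j then (Z i j + Z j i) / 2 else (Z j i + Z i j) / 2)"

text \<open>SO_3(K) and its action by simultaneous conjugation (g^{-1} = g^T).\<close>
definition SO3 :: "(nat \<Rightarrow> nat \<Rightarrow> 'k::comm_ring_1) \<Rightarrow> bool" where
  "SO3 g \<longleftrightarrow> (\<forall>i\<in>{1..3}. \<forall>j\<in>{1..3}. (\<Sum>l = 1..3. g i l * g j l) = (if i = j then 1 else 0))
             \<and> det3 g = 1"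

definition conj :: "(nat \<Rightarrow> nat \<Rightarrow> 'k::comm_ring_1) \<Rightarrow> (nat \<Rightarrow> nat \<Rightarrow> 'k) \<Rightarrow> nat \<Rightarrow> nat \<Rightarrow> 'k" where
  "conj g M i j = (\<Sum>a = 1..3. \<Sum>b = 1..3. g i a * M a b * g j b)"

definition SO3_invariant :: "'k::comm_ring_1 fn \<Rightarrow> bool" where
  "SO3_invariant f \<longleftrightarrow> (\<forall>g. SO3 g \<longrightarrow>
      (\<forall>T Z. f (\<lambda>k i j. conj g (tmat T k) i j) (conj g Z) = f T Z))"

definition in_C2 :: "'k::field_char_0 fn \<Rightarrow> bool" where
  "in_C2 f \<longleftrightarrow> (\<exists>p. (\<forall>i j. p i j \<in> polyT) \<and>
       (\<forall>T Z. f T Z = (\<Sum>i = 1..3. \<Sum>j = i+1..3. p i j T * umat Z i j)))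
     \<and> SO3_invariant f"

definition in_C3 :: "'k::field_char_0 fn \<Rightarrow> bool" where
  "in_C3 f \<longleftrightarrow> (\<exists>p. (\<forall>i j. p i j \<in> polyT) \<and>
       (\<forall>T Z. f T Z = (\<Sum>i = 1..3. \<Sum>j = i..3. p i j T * smat Z i j)))
     \<and> SO3_invariant f"

definition GL3 :: "(nat \<Rightarrow> nat \<Rightarrow> 'k::comm_ring_1) \<Rightarrow> bool" where
  "GL3 g \<longleftrightarrow> det3 g \<noteq> 0"

definition gl_act :: "(nat \<Rightarrow> nat \<Rightarrow> 'k::comm_ring_1) \<Rightarrow> 'k fn \<Rightarrow> 'k fn" where
  "gl_act g f = (\<lambda>T Z. f (\<lambda>k i j. \<Sum>l = 1..3. g l k * T l i j) Z)"

definition unipotent_upper :: "(nat \<Rightarrow> nat \<Rightarrow> 'k::comm_ring_1) \<Rightarrow> bool" where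
  "unipotent_upper g \<longleftrightarrow> (\<forall>i\<in>{1..3}. g i i = 1) \<and>
      (\<forall>i\<in>{1..3}. \<forall>j\<in>{1..3}. j < i \<longrightarrow> g i j = 0)"

definition multihom :: "'k::comm_ring_1 fn \<Rightarrow> (nat \<Rightarrow> nat) \<Rightarrow> bool" where
  "multihom f lam \<longleftrightarrow> (\<forall>c T Z. f (\<lambda>k i j. c k * T k i j) Z = (\<Prod>k = 1..3. c k ^ lam k) * f T Z)"

definition hwv :: "'k::comm_ring_1 fn \<Rightarrow> (nat \<Rightarrow> nat) \<Rightarrow> bool" where
  "hwv f lam \<longleftrightarrow> f \<noteq> (\<lambda>T Z. 0) \<and> multihom f lam \<and>
      (\<forall>g. unipotent_upper g \<longrightarrow> gl_act g f = f)"

inductive_set gl_cyclic :: "'k::comm_ring_1 fn \<Rightarrow> 'k fn set" for f where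
  gen: "GL3 g \<Longrightarrow> gl_act g f \<in> gl_cyclic f"
| zero: "(\<lambda>T Z. 0) \<in> gl_cyclic f"
| add: "h1 \<in> gl_cyclic f \<Longrightarrow> h2 \<in> gl_cyclic f \<Longrightarrow> (\<lambda>T Z. h1 T Z + h2 T Z) \<in> gl_cyclic f"
| smult: "h \<in> gl_cyclic f \<Longrightarrow> (\<lambda>T Z. c * h T Z) \<in> gl_cyclic f"

definition gl_submodule :: "'k::comm_ring_1 fn set \<Rightarrow> bool" where
  "gl_submodule V \<longleftrightarrow> (\<lambda>T Z. 0) \<in> V
     \<and> (\<forall>h1\<in>V. \<forall>h2\<in>V. (\<lambda>T Z. h1 T Z + h2 T Z) \<in> V)
     \<and> (\<forall>c. \<forall>h\<in>V. (\<lambda>T Z. c * h T Z) \<in> V)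
     \<and> (\<forall>g. GL3 g \<longrightarrow> (\<forall>h\<in>V. gl_act g h \<in> V))"

definition gl_irreducible :: "'k::comm_ring_1 fn set \<Rightarrow> bool" where
  "gl_irreducible M \<longleftrightarrow> M \<noteq> {\<lambda>T Z. 0} \<and>
     (\<forall>V. V \<subseteq> M \<longrightarrow> gl_submodule V \<longrightarrow> V \<noteq> {\<lambda>T Z. 0} \<longrightarrow> V = M)"

definition wt :: "nat \<Rightarrow> nat \<Rightarrow> nat \<Rightarrow> nat \<Rightarrow> nat" where
  "wt a b c k = (if k = 1 then a else if k = 2 then b else if k = 3 then c else 0)"

text \<open>f is a highest weight vector of weight lam generating a submodule isomorphic to
  W_3(lam): the cyclic submodule is irreducible and f is a highest weight vector of weight lam
  in it (irreducible polynomial GL_3-modules are classified by their highest weight).\<close>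
definition generates_W3 :: "'k::comm_ring_1 fn \<Rightarrow> (nat \<Rightarrow> nat) \<Rightarrow> bool" where
  "generates_W3 f lam \<longleftrightarrow> hwv f lam \<and> gl_irreducible (gl_cyclic f)"

end

theory Submission
  imports Defs
begin

lemma s3: "(\<Sum>i = 1..3. f i) = f 1 + f 2 + f (3::nat)"
  by (simp add: eval_nat_numeral atLeastAtMostSuc_conv add.commute add.left_commute)

lemma swap4: "(\<Sum>i\<in>A. \<Sum>j\<in>B. \<Sum>k\<in>C. \<Sum>l\<in>D. \<Sum>p\<in>P. h p i j k l) = (\<Sum>p\<in>P. \<Sum>i\<in>A. \<Sum>j\<in>B. \<Sum>k\<in>C. \<Sum>l\<in>D. h p i j k l)"
proof -
  have "(\<Sum>i\<in>A. \<Sum>j\<in>B. \<Sum>k\<in>C. \<Sum>l\<in>D. \<Sum>p\<in>P. h p i j k l) = (\<Sum>i\<in>A. \<Sum>j\<in>B. \<Sum>k\<in>C. \<Sum>p\<in>P. \<Sum>l\<in>D. h p i j k l)"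
    by (simp add: sum.swap[of _ D])
  also have "\<dots> = (\<Sum>i\<in>A. \<Sum>j\<in>B. \<Sum>p\<in>P. \<Sum>k\<in>C. \<Sum>l\<in>D. h p i j k l)"
    by (rule sum.cong[OF refl], rule sum.cong[OF refl], rule sum.swap)
  also have "\<dots> = (\<Sum>i\<in>A. \<Sum>p\<in>P. \<Sum>j\<in>B. \<Sum>k\<in>C. \<Sum>l\<in>D. h p i j k l)"
    by (rule sum.cong[OF refl], rule sum.swap)
  also have "\<dots> = (\<Sum>p\<in>P. \<Sum>i\<in>A. \<Sum>j\<in>B. \<Sum>k\<in>C. \<Sum>l\<in>D. h p i j k l)"
    by (rule sum.swap)
  finally show ?thesis .
qed

lemma lin4:
  assumes "\<And>i j k l. F i j k l = (\<Sum>p\<in>P. a p * G p i j k l)"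
  shows "(\<Sum>i\<in>A. \<Sum>j\<in>B. \<Sum>k\<in>C. \<Sum>l\<in>D. F i j k l) = (\<Sum>p\<in>P. (a p::'a::comm_ring_1) * (\<Sum>i\<in>A. \<Sum>j\<in>B. \<Sum>k\<in>C. \<Sum>l\<in>D. G p i j k l))"
  unfolding assms sum_distrib_left by (rule swap4)

definition tr4 :: "(nat \<Rightarrow> nat \<Rightarrow> 'k::comm_ring_1) \<Rightarrow> (nat \<Rightarrow> nat \<Rightarrow> 'k) \<Rightarrow> (nat \<Rightarrow> nat \<Rightarrow> 'k) \<Rightarrow> (nat \<Rightarrow> nat \<Rightarrow> 'k) \<Rightarrow> 'k" where
 "tr4 A B C S = (\<Sum>i=1..3. \<Sum>j=1..3. \<Sum>k=1..3. \<Sum>l=1..3. A i j * B j k * C k l * S l i)"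

lemma tr4_lin1: "tr4 (\<lambda>i j. \<Sum>p::nat=1..3. a p * X p i j) B C S = (\<Sum>p=1..3. a p * tr4 (X p) B C S)"
  unfolding tr4_def by (rule lin4) (simp only: sum_distrib_right mult.assoc)
lemma tr4_lin2: "tr4 A (\<lambda>i j. \<Sum>p::nat=1..3. a p * X p i j) C S = (\<Sum>p=1..3. a p * tr4 A (X p) C S)"
  unfolding tr4_def by (rule lin4) (simp add: sum_distrib_right sum_distrib_left mult.assoc mult.left_commute)
lemma tr4_lin3: "tr4 A B (\<lambda>i j. \<Sum>p::nat=1..3. a p * X p i j) S = (\<Sum>p=1..3. a p * tr4 A B (X p) S)"
  unfolding tr4_def by (rule lin4) (simp add: sum_distrib_right sum_distrib_left mult.assoc mult.left_commute)

definition Sg :: "(nat \<Rightarrow> nat \<Rightarrow> 'k::comm_ring_1) \<Rightarrow> 'k tcoords \<Rightarrow> 'k tcoords" where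
  "Sg g T = (\<lambda>k i j. \<Sum>l = 1..3. g l k * T l i j)"

lemma gl_act_Sg: "gl_act g f T Z = f (Sg g T) Z"
  by (simp add: gl_act_def Sg_def)

lemma tmat_Sg: "tmat (Sg g T) k = (\<lambda>i j. \<Sum>l::nat = 1..3. g l k * tmat T l i j)"
  by (rule ext, rule ext) (auto simp: tmat_def Sg_def sum_negf[symmetric])

definition comb3 :: "(nat \<Rightarrow> nat \<Rightarrow> nat \<Rightarrow> 'k::comm_ring_1 fn) \<Rightarrow> (nat \<Rightarrow> nat \<Rightarrow> nat \<Rightarrow> 'k) \<Rightarrow> 'k fn" where
 "comb3 B b = (\<lambda>T Z. \<Sum>l=1..3. \<Sum>m=1..3. \<Sum>n=1..3. b l m n * B l m n T Z)"

definition rho3 :: "(nat \<Rightarrow> nat \<Rightarrow> 'k::comm_ring_1) \<Rightarrow> (nat \<Rightarrow> nat \<Rightarrow> nat \<Rightarrow> 'k) \<Rightarrow> nat \<Rightarrow> nat \<Rightarrow> nat \<Rightarrow> 'k" where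
 "rho3 g b p q r = (\<Sum>l=1..3. \<Sum>m=1..3. \<Sum>n=1..3. g p l * g q m * g r n * b l m n)"

definition cov3 :: "(nat \<Rightarrow> nat \<Rightarrow> nat \<Rightarrow> 'k::comm_ring_1 fn) \<Rightarrow> bool" where
 "cov3 B \<longleftrightarrow> (\<forall>g l m n T Z. B l m n (Sg g T) Z = (\<Sum>p=1..3. \<Sum>q=1..3. \<Sum>r=1..3. g p l * g q m * g r n * B p q r T Z))"

lemma swap13: "(\<Sum>x\<in>X. \<Sum>p\<in>A. \<Sum>q\<in>A. \<Sum>r\<in>A. h x p q r) = (\<Sum>p\<in>A. \<Sum>q\<in>A. \<Sum>r\<in>A. \<Sum>x\<in>X. h x p q r)"
proof -
  have "(\<Sum>x\<in>X. \<Sum>p\<in>A. \<Sum>q\<in>A. \<Sum>r\<in>A. h x p q r) = (\<Sum>p\<in>A. \<Sum>x\<in>X. \<Sum>q\<in>A. \<Sum>r\<in>A. h x p q r)"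
    by (rule sum.swap)
  also have "\<dots> = (\<Sum>p\<in>A. \<Sum>q\<in>A. \<Sum>x\<in>X. \<Sum>r\<in>A. h x p q r)"
    by (rule sum.cong[OF refl], rule sum.swap)
  also have "\<dots> = (\<Sum>p\<in>A. \<Sum>q\<in>A. \<Sum>r\<in>A. \<Sum>x\<in>X. h x p q r)"
    by (rule sum.cong[OF refl], rule sum.cong[OF refl], rule sum.swap)
  finally show ?thesis .
qed

lemma swap33: "(\<Sum>l\<in>A. \<Sum>m\<in>A. \<Sum>n\<in>A. \<Sum>p\<in>A. \<Sum>q\<in>A. \<Sum>r\<in>A. h l m n p q r) =
   (\<Sum>p\<in>A. \<Sum>q\<in>A. \<Sum>r\<in>A. \<Sum>l\<in>A. \<Sum>m\<in>A. \<Sum>n\<in>A. h l m n p q r)"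
proof -
  have "(\<Sum>l\<in>A. \<Sum>m\<in>A. \<Sum>n\<in>A. \<Sum>p\<in>A. \<Sum>q\<in>A. \<Sum>r\<in>A. h l m n p q r) =
     (\<Sum>l\<in>A. \<Sum>m\<in>A. \<Sum>p\<in>A. \<Sum>q\<in>A. \<Sum>r\<in>A. \<Sum>n\<in>A. h l m n p q r)"
    by (rule sum.cong[OF refl], rule sum.cong[OF refl], rule swap13)
  also have "\<dots> = (\<Sum>l\<in>A. \<Sum>p\<in>A. \<Sum>q\<in>A. \<Sum>r\<in>A. \<Sum>m\<in>A. \<Sum>n\<in>A. h l m n p q r)"
    by (rule sum.cong[OF refl], rule swap13)
  also have "\<dots> = (\<Sum>p\<in>A. \<Sum>q\<in>A. \<Sum>r\<in>A. \<Sum>l\<in>A. \<Sum>m\<in>A. \<Sum>n\<in>A. h l m n p q r)"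
    by (rule swap13)
  finally show ?thesis .
qed

lemma act3: assumes "cov3 B" shows "gl_act g (comb3 B b) = comb3 B (rho3 g b)"
proof (rule ext, rule ext)
  fix T Z
  have "gl_act g (comb3 B b) T Z = (\<Sum>l=1..3. \<Sum>m=1..3. \<Sum>n=1..3. b l m n *
     (\<Sum>p=1..3. \<Sum>q=1..3. \<Sum>r=1..3. g p l * g q m * g r n * B p q r T Z))"
    using assms by (simp add: gl_act_Sg comb3_def cov3_def)
  also have "\<dots> = (\<Sum>l=1..3. \<Sum>m=1..3. \<Sum>n=1..3. \<Sum>p=1..3. \<Sum>q=1..3. \<Sum>r=1..3. g p l * g q m * g r n * b l m n * B p q r T Z)"
    by (simp add: sum_distrib_left mult.assoc mult.left_commute)
  also have "\<dots> = (\<Sum>p=1..3. \<Sum>q=1..3. \<Sum>r=1..3. \<Sum>l=1..3. \<Sum>m=1..3. \<Sum>n=1..3. g p l * g q m * g r n * b l m n * B p q r T Z)"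
    by (rule swap33)
  also have "\<dots> = comb3 B (rho3 g b) T Z"
    by (simp add: comb3_def rho3_def sum_distrib_right)
  finally show "gl_act g (comb3 B b) T Z = comb3 B (rho3 g b) T Z" .
qed

lemma sub_smult: "gl_submodule V \<Longrightarrow> h \<in> V \<Longrightarrow> (\<lambda>T Z. c * h T Z) \<in> V"
  unfolding gl_submodule_def by blast
lemma sub_add: "gl_submodule V \<Longrightarrow> h1 \<in> V \<Longrightarrow> h2 \<in> V \<Longrightarrow> (\<lambda>T Z. h1 T Z + h2 T Z) \<in> V"
  unfolding gl_submodule_def by blast
lemma sub_lin: "gl_submodule V \<Longrightarrow> h1 \<in> V \<Longrightarrow> h2 \<in> V \<Longrightarrow> (\<lambda>T Z. a * h1 T Z + h2 T Z) \<in> V"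
  using sub_add[of V "\<lambda>T Z. a * h1 T Z" h2] sub_smult by blast
lemma sub_act: "gl_submodule V \<Longrightarrow> h \<in> V \<Longrightarrow> GL3 g \<Longrightarrow> gl_act g h \<in> V"
  unfolding gl_submodule_def by blast
lemma sub_cong: "h \<in> V \<Longrightarrow> (\<And>T Z. h T Z = h' T Z) \<Longrightarrow> h' \<in> V"
proof -
  assume "h \<in> V" "\<And>T Z. h T Z = h' T Z"
  then have "h = h'" by (intro ext) 
  with \<open>h \<in> V\<close> show ?thesis by simp
qed
lemma sub_unsmult: "gl_submodule V \<Longrightarrow> (\<lambda>T Z. (c::'k::field) * h T Z) \<in> V \<Longrightarrow> c \<noteq> 0 \<Longrightarrow> h \<in> V"
  by (rule sub_cong[OF sub_smult[of V "\<lambda>T Z. c * h T Z" "inverse c"]]) auto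

definition Ec :: "(nat \<Rightarrow> nat \<Rightarrow> 'k::comm_ring_1) \<Rightarrow> 'k \<Rightarrow> nat \<Rightarrow> nat \<Rightarrow> 'k" where
  "Ec E c i j = E i j + c * (if i = j then 1 else 0)"

lemma prod_interp3: "(x1::'a::comm_ring_1) * x2 * x3 =
   10 * ((x1 + 2*y1) * (x2 + 2*y2) * (x3 + 2*y3)) - 20 * ((x1 + 3*y1) * (x2 + 3*y2) * (x3 + 3*y3))
   + 15 * ((x1 + 4*y1) * (x2 + 4*y2) * (x3 + 4*y3)) - 4 * ((x1 + 5*y1) * (x2 + 5*y2) * (x3 + 5*y3))"
  by (simp add: algebra_simps)

lemma rho3_interp: "rho3 E b p q r = 10 * rho3 (Ec E 2) b p q r - 20 * rho3 (Ec E 3) b p q r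
   + 15 * rho3 (Ec E 4) b p q r - 4 * rho3 (Ec E 5) b p q r"
proof -
  have "\<And>l m n. E p l * E q m * E r n * b l m n = 10 * (Ec E 2 p l * Ec E 2 q m * Ec E 2 r n * b l m n)
     - 20 * (Ec E 3 p l * Ec E 3 q m * Ec E 3 r n * b l m n) + 15 * (Ec E 4 p l * Ec E 4 q m * Ec E 4 r n * b l m n)
     - 4 * (Ec E 5 p l * Ec E 5 q m * Ec E 5 r n * b l m n)"
    unfolding Ec_def
    by (subst prod_interp3[of "E p l" "E q m" "E r n" "if p = l then 1 else 0" "if q = m then 1 else 0" "if r = n then 1 else 0"]) (simp add: algebra_simps)
  then show ?thesis unfolding rho3_def
    by (simp add: sum.distrib sum_subtractf sum_distrib_left)
qed

lemma comb3_lin: "comb3 B (\<lambda>l m n. a * b1 l m n + b2 l m n) T Z = a * comb3 B b1 T Z + comb3 B b2 T Z"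
  by (simp add: comb3_def sum.distrib sum_distrib_left algebra_simps)
lemma comb3_smult: "comb3 B (\<lambda>l m n. a * b l m n) T Z = a * comb3 B b T Z"
  by (simp add: comb3_def sum_distrib_left algebra_simps)
lemma comb3_cong: "(\<And>l m n. l \<in> {1..3} \<Longrightarrow> m \<in> {1..3} \<Longrightarrow> n \<in> {1..3} \<Longrightarrow> b l m n = b' l m n) \<Longrightarrow> comb3 B b = comb3 B b'"
  unfolding comb3_def by (intro ext sum.cong refl) auto

lemma closure3: "gl_submodule V \<Longrightarrow> cov3 B \<Longrightarrow> comb3 B b \<in> V \<Longrightarrow> GL3 g \<Longrightarrow> comb3 B (rho3 g b) \<in> V"
  using sub_act act3 by metis

lemma interp3:
  assumes V: "gl_submodule V" and B: "cov3 B" and b: "comb3 B b \<in> V"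
    and g: "GL3 (Ec E 2)" "GL3 (Ec E 3)" "GL3 (Ec E 4)" "GL3 (Ec E 5)"
  shows "comb3 B (rho3 E b) \<in> V"
proof -
  let ?h = "\<lambda>c. comb3 B (rho3 (Ec E c) b)"
  have h: "?h 2 \<in> V" "?h 3 \<in> V" "?h 4 \<in> V" "?h 5 \<in> V" using closure3[OF V B b] g by auto
  have "(\<lambda>T Z. 10 * ?h 2 T Z + ((-20) * ?h 3 T Z + (15 * ?h 4 T Z + (-4) * ?h 5 T Z))) \<in> V"
    by (intro sub_lin[OF V] sub_smult[OF V] h)
  moreover have "\<And>T Z. 10 * ?h 2 T Z + ((-20) * ?h 3 T Z + (15 * ?h 4 T Z + (-4) * ?h 5 T Z)) = comb3 B (rho3 E b) T Z"
  proof -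
    fix T Z
    have e: "rho3 E b = (\<lambda>l m n. 10 * rho3 (Ec E 2) b l m n + ((-20) * rho3 (Ec E 3) b l m n
       + (15 * rho3 (Ec E 4) b l m n + (-4) * rho3 (Ec E 5) b l m n)))"
      by (intro ext) (simp add: rho3_interp[of E] algebra_simps)
    show "10 * ?h 2 T Z + ((-20) * ?h 3 T Z + (15 * ?h 4 T Z + (-4) * ?h 5 T Z)) = comb3 B (rho3 E b) T Z"
      unfolding e comb3_lin comb3_smult ..
  qed
  ultimately show ?thesis by (rule sub_cong)
qed

definition comb1 :: "(nat \<Rightarrow> 'k::comm_ring_1 fn) \<Rightarrow> (nat \<Rightarrow> 'k) \<Rightarrow> 'k fn" where
 "comb1 B b = (\<lambda>T Z. \<Sum>l=1..3. b l * B l T Z)"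
definition rho1 :: "(nat \<Rightarrow> nat \<Rightarrow> 'k::comm_ring_1) \<Rightarrow> (nat \<Rightarrow> 'k) \<Rightarrow> nat \<Rightarrow> 'k" where
 "rho1 g b p = (\<Sum>l=1..3. g p l * b l)"
definition cov1 :: "(nat \<Rightarrow> 'k::comm_ring_1 fn) \<Rightarrow> bool" where
 "cov1 B \<longleftrightarrow> (\<forall>g l T Z. B l (Sg g T) Z = (\<Sum>p=1..3. g p l * B p T Z))"

definition comb2 :: "(nat \<Rightarrow> nat \<Rightarrow> 'k::comm_ring_1 fn) \<Rightarrow> (nat \<Rightarrow> nat \<Rightarrow> 'k) \<Rightarrow> 'k fn" where
 "comb2 B b = (\<lambda>T Z. \<Sum>l=1..3. \<Sum>m=1..3. b l m * B l m T Z)"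
definition rho2 :: "(nat \<Rightarrow> nat \<Rightarrow> 'k::comm_ring_1) \<Rightarrow> (nat \<Rightarrow> nat \<Rightarrow> 'k) \<Rightarrow> nat \<Rightarrow> nat \<Rightarrow> 'k" where
 "rho2 g b p q = (\<Sum>l=1..3. \<Sum>m=1..3. g p l * g q m * b l m)"
definition cov2 :: "(nat \<Rightarrow> nat \<Rightarrow> 'k::comm_ring_1 fn) \<Rightarrow> bool" where
 "cov2 B \<longleftrightarrow> (\<forall>g l m T Z. B l m (Sg g T) Z = (\<Sum>p=1..3. \<Sum>q=1..3. g p l * g q m * B p q T Z))"

lemma swap12: "(\<Sum>x\<in>X. \<Sum>p\<in>A. \<Sum>q\<in>A. h x p q) = (\<Sum>p\<in>A. \<Sum>q\<in>A. \<Sum>x\<in>X. h x p q)"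
proof -
  have "(\<Sum>x\<in>X. \<Sum>p\<in>A. \<Sum>q\<in>A. h x p q) = (\<Sum>p\<in>A. \<Sum>x\<in>X. \<Sum>q\<in>A. h x p q)"
    by (rule sum.swap)
  also have "\<dots> = (\<Sum>p\<in>A. \<Sum>q\<in>A. \<Sum>x\<in>X. h x p q)"
    by (rule sum.cong[OF refl], rule sum.swap)
  finally show ?thesis .
qed

lemma swap22: "(\<Sum>l\<in>A. \<Sum>m\<in>A. \<Sum>p\<in>A. \<Sum>q\<in>A. h l m p q) = (\<Sum>p\<in>A. \<Sum>q\<in>A. \<Sum>l\<in>A. \<Sum>m\<in>A. h l m p q)"
proof -
  have "(\<Sum>l\<in>A. \<Sum>m\<in>A. \<Sum>p\<in>A. \<Sum>q\<in>A. h l m p q) = (\<Sum>l\<in>A. \<Sum>p\<in>A. \<Sum>q\<in>A. \<Sum>m\<in>A. h l m p q)"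
    by (rule sum.cong[OF refl], rule swap12)
  also have "\<dots> = (\<Sum>p\<in>A. \<Sum>q\<in>A. \<Sum>l\<in>A. \<Sum>m\<in>A. h l m p q)"
    by (rule swap12)
  finally show ?thesis .
qed

lemma act1: assumes "cov1 B" shows "gl_act g (comb1 B b) = comb1 B (rho1 g b)"
proof (rule ext, rule ext)
  fix T Z
  have "gl_act g (comb1 B b) T Z = (\<Sum>l=1..3. b l * (\<Sum>p=1..3. g p l * B p T Z))"
    using assms by (simp add: gl_act_Sg comb1_def cov1_def)
  also have "\<dots> = (\<Sum>l=1..3. \<Sum>p=1..3. g p l * b l * B p T Z)"
    by (simp add: sum_distrib_left mult.assoc mult.left_commute)
  also have "\<dots> = (\<Sum>p=1..3. \<Sum>l=1..3. g p l * b l * B p T Z)"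
    by (rule sum.swap)
  also have "\<dots> = comb1 B (rho1 g b) T Z"
    by (simp add: comb1_def rho1_def sum_distrib_right)
  finally show "gl_act g (comb1 B b) T Z = comb1 B (rho1 g b) T Z" .
qed

lemma act2: assumes "cov2 B" shows "gl_act g (comb2 B b) = comb2 B (rho2 g b)"
proof (rule ext, rule ext)
  fix T Z
  have "gl_act g (comb2 B b) T Z = (\<Sum>l=1..3. \<Sum>m=1..3. b l m * (\<Sum>p=1..3. \<Sum>q=1..3. g p l * g q m * B p q T Z))"
    using assms by (simp add: gl_act_Sg comb2_def cov2_def)
  also have "\<dots> = (\<Sum>l=1..3. \<Sum>m=1..3. \<Sum>p=1..3. \<Sum>q=1..3. g p l * g q m * b l m * B p q T Z)"
    by (simp add: sum_distrib_left mult.assoc mult.left_commute)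
  also have "\<dots> = (\<Sum>p=1..3. \<Sum>q=1..3. \<Sum>l=1..3. \<Sum>m=1..3. g p l * g q m * b l m * B p q T Z)"
    by (rule swap22)
  also have "\<dots> = comb2 B (rho2 g b) T Z"
    by (simp add: comb2_def rho2_def sum_distrib_right)
  finally show "gl_act g (comb2 B b) T Z = comb2 B (rho2 g b) T Z" .
qed

lemma prod_interp1: "(x1::'a::comm_ring_1) =
   10 * (x1 + 2*y1) - 20 * (x1 + 3*y1) + 15 * (x1 + 4*y1) - 4 * (x1 + 5*y1)"
  by (simp add: algebra_simps)
lemma prod_interp2: "(x1::'a::comm_ring_1) * x2 =
   10 * ((x1 + 2*y1) * (x2 + 2*y2)) - 20 * ((x1 + 3*y1) * (x2 + 3*y2))
   + 15 * ((x1 + 4*y1) * (x2 + 4*y2)) - 4 * ((x1 + 5*y1) * (x2 + 5*y2))"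
  by (simp add: algebra_simps)

lemma rho1_interp: "rho1 E b p = 10 * rho1 (Ec E 2) b p - 20 * rho1 (Ec E 3) b p
   + 15 * rho1 (Ec E 4) b p - 4 * rho1 (Ec E 5) b p"
proof -
  have "\<And>l. E p l * b l = 10 * (Ec E 2 p l * b l)
     - 20 * (Ec E 3 p l * b l) + 15 * (Ec E 4 p l * b l) - 4 * (Ec E 5 p l * b l)"
    unfolding Ec_def
    by (subst prod_interp1[of "E p l" "if p = l then 1 else 0"]) (simp add: algebra_simps)
  then show ?thesis unfolding rho1_def
    by (simp add: sum.distrib sum_subtractf sum_distrib_left)
qed

lemma rho2_interp: "rho2 E b p q = 10 * rho2 (Ec E 2) b p q - 20 * rho2 (Ec E 3) b p q
   + 15 * rho2 (Ec E 4) b p q - 4 * rho2 (Ec E 5) b p q"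
proof -
  have "\<And>l m. E p l * E q m * b l m = 10 * (Ec E 2 p l * Ec E 2 q m * b l m)
     - 20 * (Ec E 3 p l * Ec E 3 q m * b l m) + 15 * (Ec E 4 p l * Ec E 4 q m * b l m)
     - 4 * (Ec E 5 p l * Ec E 5 q m * b l m)"
    unfolding Ec_def
    by (subst prod_interp2[of "E p l" "E q m" "if p = l then 1 else 0" "if q = m then 1 else 0"]) (simp add: algebra_simps)
  then show ?thesis unfolding rho2_def
    by (simp add: sum.distrib sum_subtractf sum_distrib_left)
qed

lemma comb1_lin: "comb1 B (\<lambda>l. a * b1 l + b2 l) T Z = a * comb1 B b1 T Z + comb1 B b2 T Z"
  by (simp add: comb1_def sum.distrib sum_distrib_left algebra_simps)
lemma comb1_smult: "comb1 B (\<lambda>l. a * b l) T Z = a * comb1 B b T Z"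
  by (simp add: comb1_def sum_distrib_left algebra_simps)
lemma comb1_cong: "(\<And>l. l \<in> {1..3} \<Longrightarrow> b l = b' l) \<Longrightarrow> comb1 B b = comb1 B b'"
  unfolding comb1_def by (intro ext sum.cong refl) auto
lemma comb2_lin: "comb2 B (\<lambda>l m. a * b1 l m + b2 l m) T Z = a * comb2 B b1 T Z + comb2 B b2 T Z"
  by (simp add: comb2_def sum.distrib sum_distrib_left algebra_simps)
lemma comb2_smult: "comb2 B (\<lambda>l m. a * b l m) T Z = a * comb2 B b T Z"
  by (simp add: comb2_def sum_distrib_left algebra_simps)
lemma comb2_cong: "(\<And>l m. l \<in> {1..3} \<Longrightarrow> m \<in> {1..3} \<Longrightarrow> b l m = b' l m) \<Longrightarrow> comb2 B b = comb2 B b'"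
  unfolding comb2_def by (intro ext sum.cong refl) auto

lemma closure1: "gl_submodule V \<Longrightarrow> cov1 B \<Longrightarrow> comb1 B b \<in> V \<Longrightarrow> GL3 g \<Longrightarrow> comb1 B (rho1 g b) \<in> V"
  using sub_act act1 by metis
lemma closure2: "gl_submodule V \<Longrightarrow> cov2 B \<Longrightarrow> comb2 B b \<in> V \<Longrightarrow> GL3 g \<Longrightarrow> comb2 B (rho2 g b) \<in> V"
  using sub_act act2 by metis

lemma interp1:
  assumes V: "gl_submodule V" and B: "cov1 B" and b: "comb1 B b \<in> V"
    and g: "GL3 (Ec E 2)" "GL3 (Ec E 3)" "GL3 (Ec E 4)" "GL3 (Ec E 5)"
  shows "comb1 B (rho1 E b) \<in> V"
proof -
  let ?h = "\<lambda>c. comb1 B (rho1 (Ec E c) b)"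
  have h: "?h 2 \<in> V" "?h 3 \<in> V" "?h 4 \<in> V" "?h 5 \<in> V" using closure1[OF V B b] g by auto
  have "(\<lambda>T Z. 10 * ?h 2 T Z + ((-20) * ?h 3 T Z + (15 * ?h 4 T Z + (-4) * ?h 5 T Z))) \<in> V"
    by (intro sub_lin[OF V] sub_smult[OF V] h)
  moreover have "\<And>T Z. 10 * ?h 2 T Z + ((-20) * ?h 3 T Z + (15 * ?h 4 T Z + (-4) * ?h 5 T Z)) = comb1 B (rho1 E b) T Z"
  proof -
    fix T Z
    have e: "rho1 E b = (\<lambda>l. 10 * rho1 (Ec E 2) b l + ((-20) * rho1 (Ec E 3) b l
       + (15 * rho1 (Ec E 4) b l + (-4) * rho1 (Ec E 5) b l)))"
      by (intro ext) (simp add: rho1_interp[of E] algebra_simps)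
    show "10 * ?h 2 T Z + ((-20) * ?h 3 T Z + (15 * ?h 4 T Z + (-4) * ?h 5 T Z)) = comb1 B (rho1 E b) T Z"
      unfolding e comb1_lin comb1_smult ..
  qed
  ultimately show ?thesis by (rule sub_cong)
qed

lemma interp2:
  assumes V: "gl_submodule V" and B: "cov2 B" and b: "comb2 B b \<in> V"
    and g: "GL3 (Ec E 2)" "GL3 (Ec E 3)" "GL3 (Ec E 4)" "GL3 (Ec E 5)"
  shows "comb2 B (rho2 E b) \<in> V"
proof -
  let ?h = "\<lambda>c. comb2 B (rho2 (Ec E c) b)"
  have h: "?h 2 \<in> V" "?h 3 \<in> V" "?h 4 \<in> V" "?h 5 \<in> V" using closure2[OF V B b] g by auto
  have "(\<lambda>T Z. 10 * ?h 2 T Z + ((-20) * ?h 3 T Z + (15 * ?h 4 T Z + (-4) * ?h 5 T Z))) \<in> V"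
    by (intro sub_lin[OF V] sub_smult[OF V] h)
  moreover have "\<And>T Z. 10 * ?h 2 T Z + ((-20) * ?h 3 T Z + (15 * ?h 4 T Z + (-4) * ?h 5 T Z)) = comb2 B (rho2 E b) T Z"
  proof -
    fix T Z
    have e: "rho2 E b = (\<lambda>l m. 10 * rho2 (Ec E 2) b l m + ((-20) * rho2 (Ec E 3) b l m
       + (15 * rho2 (Ec E 4) b l m + (-4) * rho2 (Ec E 5) b l m)))"
      by (intro ext) (simp add: rho2_interp[of E] algebra_simps)
    show "10 * ?h 2 T Z + ((-20) * ?h 3 T Z + (15 * ?h 4 T Z + (-4) * ?h 5 T Z)) = comb2 B (rho2 E b) T Z"
      unfolding e comb2_lin comb2_smult ..
  qed
  ultimately show ?thesis by (rule sub_cong)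
qed

definition idm :: "nat \<Rightarrow> nat \<Rightarrow> 'k::comm_ring_1" where "idm i j = (if i = j then 1 else 0)"

lemma GL3_idm: "GL3 (idm :: nat \<Rightarrow> nat \<Rightarrow> 'k::comm_ring_1)"
  by (simp add: GL3_def det3_def idm_def)

lemma irr_generic:
  assumes f0: "f \<noteq> (\<lambda>T Z. 0)" and fin: "f \<in> gl_cyclic f" and sub: "gl_cyclic f \<subseteq> C"
    and key: "\<And>V h. gl_submodule V \<Longrightarrow> h \<in> V \<Longrightarrow> h \<in> C \<Longrightarrow> h \<noteq> (\<lambda>T Z. 0) \<Longrightarrow> f \<in> V"
  shows "gl_irreducible (gl_cyclic f)"
  unfolding gl_irreducible_def
proof (intro conjI allI impI)
  show "gl_cyclic f \<noteq> {\<lambda>T Z. 0}" using fin f0 by auto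
next
  fix V assume VM: "V \<subseteq> gl_cyclic f" and V: "gl_submodule V" and V0: "V \<noteq> {\<lambda>T Z. 0}"
  have "(\<lambda>T Z. 0) \<in> V" using V unfolding gl_submodule_def by blast
  with V0 obtain h where h: "h \<in> V" "h \<noteq> (\<lambda>T Z. 0)" by blast
  have fV: "f \<in> V" using key[OF V h(1) _ h(2)] h(1) VM sub by blast
  have "x \<in> V" if "x \<in> gl_cyclic f" for x
    using that
  proof (induction rule: gl_cyclic.induct)
    case (gen g) then show ?case using sub_act[OF V fV] by blast
  next
    case zero then show ?case using V unfolding gl_submodule_def by blast
  next
    case (add h1 h2) then show ?case using sub_add[OF V] by blast
  next
    case (smult h c) then show ?case using sub_smult[OF V] by blast
  qed
  with VM show "V = gl_cyclic f" by blast
qed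

lemma inR: "x = F y \<Longrightarrow> x \<in> range F" by simp

lemma cyc3: assumes "cov3 B" "f = comb3 B e" shows "gl_cyclic f \<subseteq> range (comb3 B)"
proof
  fix x assume "x \<in> gl_cyclic f"
  then show "x \<in> range (comb3 B)"
  proof (induction rule: gl_cyclic.induct)
    case (gen g) have "gl_act g f = comb3 B (rho3 g e)" using act3[OF assms(1)] assms(2) by simp
    then show ?case by blast
  next
    case zero show ?case using inR[of "\<lambda>T Z. 0" "comb3 B" "\<lambda>l m n. 0"] by (simp add: comb3_def)
  next
    case (add h1 h2)
    then obtain b1 b2 where "h1 = comb3 B b1" "h2 = comb3 B b2" by auto
    then have "(\<lambda>T Z. h1 T Z + h2 T Z) = comb3 B (\<lambda>l m n. 1 * b1 l m n + b2 l m n)"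
      by (intro ext) (simp only: comb3_lin, simp)
    then show ?case by blast
  next
    case (smult h c)
    then obtain b1 where "h = comb3 B b1" by auto
    then have "(\<lambda>T Z. c * h T Z) = comb3 B (\<lambda>l m n. c * b1 l m n)"
      by (intro ext) (simp only: comb3_smult)
    then show ?case by blast
  qed
qed

lemma cyc2: assumes "cov2 B" "f = comb2 B e" shows "gl_cyclic f \<subseteq> range (comb2 B)"
proof
  fix x assume "x \<in> gl_cyclic f"
  then show "x \<in> range (comb2 B)"
  proof (induction rule: gl_cyclic.induct)
    case (gen g) have "gl_act g f = comb2 B (rho2 g e)" using act2[OF assms(1)] assms(2) by simp
    then show ?case by blast
  next
    case zero show ?case using inR[of "\<lambda>T Z. 0" "comb2 B" "\<lambda>l m. 0"] by (simp add: comb2_def)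
  next
    case (add h1 h2)
    then obtain b1 b2 where "h1 = comb2 B b1" "h2 = comb2 B b2" by auto
    then have "(\<lambda>T Z. h1 T Z + h2 T Z) = comb2 B (\<lambda>l m. 1 * b1 l m + b2 l m)"
      by (intro ext) (simp only: comb2_lin, simp)
    then show ?case by blast
  next
    case (smult h c)
    then obtain b1 where "h = comb2 B b1" by auto
    then have "(\<lambda>T Z. c * h T Z) = comb2 B (\<lambda>l m. c * b1 l m)"
      by (intro ext) (simp only: comb2_smult)
    then show ?case by blast
  qed
qed

lemma cyc1: assumes "cov1 B" "f = comb1 B e" shows "gl_cyclic f \<subseteq> range (comb1 B)"
proof
  fix x assume "x \<in> gl_cyclic f"
  then show "x \<in> range (comb1 B)"
  proof (induction rule: gl_cyclic.induct)
    case (gen g) have "gl_act g f = comb1 B (rho1 g e)" using act1[OF assms(1)] assms(2) by simp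
    then show ?case by blast
  next
    case zero show ?case using inR[of "\<lambda>T Z. 0" "comb1 B" "\<lambda>l. 0"] by (simp add: comb1_def)
  next
    case (add h1 h2)
    then obtain b1 b2 where "h1 = comb1 B b1" "h2 = comb1 B b2" by auto
    then have "(\<lambda>T Z. h1 T Z + h2 T Z) = comb1 B (\<lambda>l. 1 * b1 l + b2 l)"
      by (intro ext) (simp only: comb1_lin, simp)
    then show ?case by blast
  next
    case (smult h c)
    then obtain b1 where "h = comb1 B b1" by auto
    then have "(\<lambda>T Z. c * h T Z) = comb1 B (\<lambda>l. c * b1 l)"
      by (intro ext) (simp only: comb1_smult)
    then show ?case by blast
  qed
qed

lemma in_range3: "(p::nat) \<in> {1..3} \<Longrightarrow> p = 1 \<or> p = 2 \<or> p = 3" by auto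

lemma s3b: "(\<Sum>i = Suc 0..3. f i) = f 1 + f 2 + f (3::nat)"
  using s3[of f] by simp

lemma delta_mult: "(if a = b then 1 else 0) * (x::'a::comm_ring_1) = (if a = b then x else 0)" by simp

lemma rho3_idm: assumes "p \<in> {1..3}" "q \<in> {1..3}" "r \<in> {1..3}" shows "rho3 idm b p q r = b p q r"
  using in_range3[OF assms(1)] in_range3[OF assms(2)] in_range3[OF assms(3)] by (auto simp: rho3_def idm_def s3 s3b)
lemma rho2_idm: assumes "p \<in> {1..3}" "q \<in> {1..3}" shows "rho2 idm b p q = b p q"
  using in_range3[OF assms(1)] in_range3[OF assms(2)] by (auto simp: rho2_def idm_def s3 s3b)
lemma rho1_idm: assumes "p \<in> {1..3}" shows "rho1 idm b p = b p"
  using in_range3[OF assms(1)] by (auto simp: rho1_def idm_def s3 s3b)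

lemma self3: "cov3 B \<Longrightarrow> f = comb3 B e \<Longrightarrow> f \<in> gl_cyclic f"
  using gl_cyclic.gen[OF GL3_idm, of f] act3[of B idm e] comb3_cong[of "rho3 idm e" e B] rho3_idm by metis
lemma self2: "cov2 B \<Longrightarrow> f = comb2 B e \<Longrightarrow> f \<in> gl_cyclic f"
  using gl_cyclic.gen[OF GL3_idm, of f] act2[of B idm e] comb2_cong[of "rho2 idm e" e B] rho2_idm by metis
lemma self1: "cov1 B \<Longrightarrow> f = comb1 B e \<Longrightarrow> f \<in> gl_cyclic f"
  using gl_cyclic.gen[OF GL3_idm, of f] act1[of B idm e] comb1_cong[of "rho1 idm e" e B] rho1_idm by metis

lemma swapin2: "(\<Sum>i\<in>A. \<Sum>j\<in>B. \<Sum>p\<in>P. h p i j) = (\<Sum>p\<in>P. \<Sum>i\<in>A. \<Sum>j\<in>B. h p i j)"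
proof -
  have "(\<Sum>i\<in>A. \<Sum>j\<in>B. \<Sum>p\<in>P. h p i j) = (\<Sum>i\<in>A. \<Sum>p\<in>P. \<Sum>j\<in>B. h p i j)"
    by (rule sum.cong[OF refl], rule sum.swap)
  also have "\<dots> = (\<Sum>p\<in>P. \<Sum>i\<in>A. \<Sum>j\<in>B. h p i j)" by (rule sum.swap)
  finally show ?thesis .
qed

lemma swapin3: "(\<Sum>i\<in>A. \<Sum>j\<in>B. \<Sum>k\<in>C. \<Sum>p\<in>P. h p i j k) = (\<Sum>p\<in>P. \<Sum>i\<in>A. \<Sum>j\<in>B. \<Sum>k\<in>C. h p i j k)"
proof -
  have "(\<Sum>i\<in>A. \<Sum>j\<in>B. \<Sum>k\<in>C. \<Sum>p\<in>P. h p i j k) = (\<Sum>i\<in>A. \<Sum>p\<in>P. \<Sum>j\<in>B. \<Sum>k\<in>C. h p i j k)"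
    by (rule sum.cong[OF refl], rule swapin2)
  also have "\<dots> = (\<Sum>p\<in>P. \<Sum>i\<in>A. \<Sum>j\<in>B. \<Sum>k\<in>C. h p i j k)" by (rule sum.swap)
  finally show ?thesis .
qed

lemma lin2:
  assumes "\<And>i j. F i j = (\<Sum>p\<in>P. a p * G p i j)"
  shows "(\<Sum>i\<in>A. \<Sum>j\<in>B. F i j) = (\<Sum>p\<in>P. (a p::'a::comm_ring_1) * (\<Sum>i\<in>A. \<Sum>j\<in>B. G p i j))"
  unfolding assms sum_distrib_left by (rule swapin2)
lemma lin3:
  assumes "\<And>i j k. F i j k = (\<Sum>p\<in>P. a p * G p i j k)"
  shows "(\<Sum>i\<in>A. \<Sum>j\<in>B. \<Sum>k\<in>C. F i j k) = (\<Sum>p\<in>P. (a p::'a::comm_ring_1) * (\<Sum>i\<in>A. \<Sum>j\<in>B. \<Sum>k\<in>C. G p i j k))"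
  unfolding assms sum_distrib_left by (rule swapin3)

definition tr2 :: "(nat \<Rightarrow> nat \<Rightarrow> 'k::comm_ring_1) \<Rightarrow> (nat \<Rightarrow> nat \<Rightarrow> 'k) \<Rightarrow> 'k" where
 "tr2 A U = (\<Sum>i=1..3. \<Sum>j=1..3. A i j * U j i)"
definition tr3 :: "(nat \<Rightarrow> nat \<Rightarrow> 'k::comm_ring_1) \<Rightarrow> (nat \<Rightarrow> nat \<Rightarrow> 'k) \<Rightarrow> (nat \<Rightarrow> nat \<Rightarrow> 'k) \<Rightarrow> 'k" where
 "tr3 A B U = (\<Sum>i=1..3. \<Sum>j=1..3. \<Sum>k=1..3. A i j * B j k * U k i)"

lemma tr2_lin1: "tr2 (\<lambda>i j. \<Sum>p::nat=1..3. a p * X p i j) U = (\<Sum>p=1..3. a p * tr2 (X p) U)"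
  unfolding tr2_def by (rule lin2) (simp only: sum_distrib_right mult.assoc)
lemma tr3_lin1: "tr3 (\<lambda>i j. \<Sum>p::nat=1..3. a p * X p i j) B U = (\<Sum>p=1..3. a p * tr3 (X p) B U)"
  unfolding tr3_def by (rule lin3) (simp only: sum_distrib_right mult.assoc)
lemma tr3_lin2: "tr3 A (\<lambda>i j. \<Sum>p::nat=1..3. a p * X p i j) U = (\<Sum>p=1..3. a p * tr3 A (X p) U)"
  unfolding tr3_def by (rule lin3) (simp add: sum_distrib_right sum_distrib_left mult.assoc mult.left_commute)

definition beta :: "(nat \<Rightarrow> nat \<Rightarrow> 'k::comm_ring_1) \<Rightarrow> (nat \<Rightarrow> nat \<Rightarrow> 'k) \<Rightarrow> (nat \<Rightarrow> nat \<Rightarrow> 'k) \<Rightarrow> (nat \<Rightarrow> nat \<Rightarrow> 'k) \<Rightarrow> 'k" where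
 "beta X Y W S = tr4 X Y W S + tr4 Y X W S - tr4 W X Y S - tr4 W Y X S"

lemma beta_lin1: "beta (\<lambda>i j. \<Sum>p::nat=1..3. a p * X p i j) Y W S = (\<Sum>p=1..3. a p * beta (X p) Y W S)"
  unfolding beta_def tr4_lin1 tr4_lin2 tr4_lin3 by (simp add: sum.distrib sum_subtractf algebra_simps)
lemma beta_lin2: "beta X (\<lambda>i j. \<Sum>p::nat=1..3. a p * Y p i j) W S = (\<Sum>p=1..3. a p * beta X (Y p) W S)"
  unfolding beta_def tr4_lin1 tr4_lin2 tr4_lin3 by (simp add: sum.distrib sum_subtractf algebra_simps)
lemma beta_lin3: "beta X Y (\<lambda>i j. \<Sum>p::nat=1..3. a p * W p i j) S = (\<Sum>p=1..3. a p * beta X Y (W p) S)"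
  unfolding beta_def tr4_lin1 tr4_lin2 tr4_lin3 by (simp add: sum.distrib sum_subtractf algebra_simps)

lemma beta_sym: "beta X Y W S = beta Y X W S"
  unfolding beta_def by (simp add: algebra_simps)
lemma beta_cyc: "beta X Y W S + beta Y W X S + beta W X Y S = 0"
  unfolding beta_def by (simp add: algebra_simps)

definition B1 :: "nat \<Rightarrow> 'k::field_char_0 fn" where "B1 l T Z = tr2 (tmat T l) (umat Z)"
definition B2 :: "nat \<Rightarrow> nat \<Rightarrow> 'k::field_char_0 fn" where "B2 l m T Z = tr3 (tmat T l) (tmat T m) (umat Z)"
definition B3 :: "nat \<Rightarrow> nat \<Rightarrow> 'k::field_char_0 fn" where "B3 l m T Z = tr3 (tmat T l) (tmat T m) (smat Z)"
definition B4 :: "nat \<Rightarrow> nat \<Rightarrow> nat \<Rightarrow> 'k::field_char_0 fn" where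
  "B4 l m n T Z = beta (tmat T l) (tmat T m) (tmat T n) (smat Z)"

lemma cov1_B1: "cov1 B1"
  unfolding cov1_def B1_def tmat_Sg tr2_lin1 by simp
lemma cov2_B2: "cov2 B2"
  unfolding cov2_def B2_def tmat_Sg tr3_lin1 tr3_lin2 by (simp add: sum_distrib_left mult.assoc)
lemma cov2_B3: "cov2 B3"
  unfolding cov2_def B3_def tmat_Sg tr3_lin1 tr3_lin2 by (simp add: sum_distrib_left mult.assoc)
lemma cov3_B4: "cov3 B4"
  unfolding cov3_def B4_def tmat_Sg beta_lin1 beta_lin2 beta_lin3 by (simp add: sum_distrib_left mult.assoc)

lemma f1_eq: "mtr (mm (tmat T 1) (umat Z)) = B1 1 T Z"
  by (simp add: mtr_def mm_def B1_def tr2_def)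
lemma mtr_mm_mm: "mtr (mm (mm A B) U) = tr3 A B U"
  by (simp add: mtr_def mm_def tr3_def s3 s3b algebra_simps)
lemma mtr_mcomm: "mtr (mm (mcomm (mm A B) W) S) = tr4 A B W S - tr4 W A B S"
  by (simp add: mtr_def mm_def mcomm_def msub_def tr4_def s3 s3b algebra_simps)

lemma B2_diag: "B2 l l T Z = 0"
  by (simp add: B2_def tr3_def s3 s3b tmat_def umat_def field_simps)
lemma B2_anti: "B2 m l T Z = - B2 l m T Z"
  by (simp add: B2_def tr3_def s3 s3b tmat_def umat_def field_simps)
lemma B3_sym: "B3 m l T Z = B3 l m T Z"
  by (simp add: B3_def tr3_def s3 s3b tmat_def smat_def field_simps)

definition F4 :: "'k::field_char_0 fn" where
  "F4 = (\<lambda>T Z. mtr (mm (mcomm (mm (tmat T 1) (tmat T 1)) (tmat T 2)) (smat Z)))"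

lemma F4_eq: "F4 T Z = B4 1 1 2 T Z / 2"
  by (simp add: F4_def B4_def beta_def mtr_mcomm)

lemma B4_sym: "B4 m l n T Z = B4 l m n T Z"
  unfolding B4_def by (rule beta_sym)
lemma B4_ppp: "B4 p p p T Z = (0::'k::field_char_0)"
proof -
  have "3 * B4 p p p T Z = (0::'k)" using beta_cyc[of "tmat T p" "tmat T p" "tmat T p" "smat Z"]
    unfolding B4_def by simp
  then show ?thesis by simp
qed
lemma B4_pqp: "B4 p q p T Z = - B4 p p q T Z / (2::'k::field_char_0)"
proof -
  have "B4 p q p T Z + B4 q p p T Z + B4 p p q T Z = (0::'k)"
    using beta_cyc[of "tmat T p" "tmat T q" "tmat T p" "smat Z"] unfolding B4_def by simp
  then have "B4 p p q T Z + 2 * B4 p q p T Z = (0::'k)" using B4_sym[of q p p T Z] by algebra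
  then have "2 * B4 p q p T Z = - B4 p p q T Z" by (simp add: eq_neg_iff_add_eq_0 add.commute)
  then show ?thesis by (simp add: field_simps)
qed
lemma B4_qpp: "B4 q p p T Z = - B4 p p q T Z / (2::'k::field_char_0)"
  using B4_pqp[of p q T Z] B4_sym[of q p p T Z] by simp
lemma B4_231: "(B4 2 3 1 T Z::'k::field_char_0) = - B4 1 2 3 T Z - B4 1 3 2 T Z"
proof -
  have "B4 1 2 3 T Z + B4 2 3 1 T Z + B4 3 1 2 T Z = (0::'k)"
    using beta_cyc[of "tmat T 1" "tmat T 2" "tmat T 3" "smat Z"] unfolding B4_def by simp
  then show ?thesis using B4_sym[of 3 1 2 T Z] by algebra
qed

definition c4a :: "(nat \<Rightarrow> nat \<Rightarrow> nat \<Rightarrow> 'k::field_char_0) \<Rightarrow> nat \<Rightarrow> nat \<Rightarrow> 'k" where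
  "c4a b p q = b p p q - b p q p / 2 - b q p p / 2"
definition c4b :: "(nat \<Rightarrow> nat \<Rightarrow> nat \<Rightarrow> 'k::field_char_0) \<Rightarrow> 'k" where
  "c4b b = b 1 2 3 + b 2 1 3 - b 2 3 1 - b 3 2 1"
definition c4c :: "(nat \<Rightarrow> nat \<Rightarrow> nat \<Rightarrow> 'k::field_char_0) \<Rightarrow> 'k" where
  "c4c b = b 1 3 2 + b 3 1 2 - b 2 3 1 - b 3 2 1"

lemma R4: "comb3 B4 b T Z = c4a b 1 2 * B4 1 1 2 T Z + c4a b 1 3 * B4 1 1 3 T Z + c4a b 2 1 * B4 2 2 1 T Z
  + c4a b 2 3 * B4 2 2 3 T Z + c4a b 3 1 * B4 3 3 1 T Z + c4a b 3 2 * B4 3 3 2 T Z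
  + c4b b * B4 1 2 3 T Z + c4c b * B4 1 3 2 T Z"
proof -
  note r = B4_ppp[of 1] B4_ppp[of 2] B4_ppp[of 3]
    B4_pqp[of 1 2] B4_pqp[of 1 3] B4_pqp[of 2 1] B4_pqp[of 2 3] B4_pqp[of 3 1] B4_pqp[of 3 2]
    B4_qpp[of 1 2] B4_qpp[of 1 3] B4_qpp[of 2 1] B4_qpp[of 2 3] B4_qpp[of 3 1] B4_qpp[of 3 2]
    B4_231 B4_sym[of 3 2 1] B4_sym[of 2 1 3] B4_sym[of 3 1 2]
  show ?thesis
    unfolding comb3_def s3 c4a_def c4b_def c4c_def
    by (simp only: r) (simp add: field_simps)
qed

definition Em :: "'k::comm_ring_1 \<Rightarrow> 'k \<Rightarrow> 'k \<Rightarrow> 'k \<Rightarrow> 'k \<Rightarrow> 'k \<Rightarrow> nat \<Rightarrow> nat \<Rightarrow> 'k" where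
 "Em x1 x2 x3 y1 y2 y3 i j = (if i = 1 then (if j = 1 then x1 else if j = 2 then x2 else if j = 3 then x3 else 0)
    else if i = 2 then (if j = 1 then y1 else if j = 2 then y2 else if j = 3 then y3 else 0) else 0)"

lemma det_Em: "det3 (Ec (Em x1 x2 x3 y1 y2 y3) c) = c * ((x1 + c) * (y2 + c) - x2 * y1)"
  by (simp add: det3_def Ec_def Em_def algebra_simps)

lemma GL_Em: "c * ((x1 + c) * (y2 + c) - x2 * y1) \<noteq> 0 \<Longrightarrow> GL3 (Ec (Em x1 x2 x3 y1 y2 y3) c)"
  by (simp add: GL3_def det_Em)

lemma useL: assumes V: "gl_submodule V" and A: "A \<in> V" and e: "\<And>T Z. A T Z = \<psi> * F4 T Z" and p: "\<psi> \<noteq> 0"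
  shows "F4 \<in> (V::'k::field_char_0 fn set)"
proof -
  have "(\<lambda>T Z. \<psi> * F4 T Z) \<in> V" using A e by (rule sub_cong)
  then show ?thesis using sub_unsmult[OF V] p by blast
qed

lemma L4:
  assumes V: "gl_submodule V" and b: "comb3 B4 b \<in> V"
  and g1: "\<And>c. c \<in> {2,3,4,5} \<Longrightarrow> GL3 (Ec E1 c)"
  and g2: "\<And>c. c \<in> {2,3,4,5} \<Longrightarrow> GL3 (Ec E2 c)"
  shows "(\<lambda>T Z. (-2) * comb3 B4 (rho3 E1 b) T Z
            + comb3 B4 (rho3 E2 b) T Z) \<in> (V::'k::field_char_0 fn set)"
  by (intro sub_lin[OF V] interp3[OF V cov3_B4 b] g1 g2) auto

lemma E4_0: "(-2) * comb3 B4 (rho3 (Em 1 0 0 0 1 0) b) T Z + comb3 B4 (rho3 (Em 2 0 0 0 1 0) b) T Z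
   = 4 * c4a b 1 2 * (F4 T Z :: 'k::field_char_0)"
  unfolding R4 F4_eq c4a_def c4b_def c4c_def rho3_def s3 by (simp add: Em_def field_simps)

lemma M4_0: assumes V: "gl_submodule V" and b: "comb3 B4 b \<in> V" and p: "4 * c4a b 1 2 \<noteq> 0"
  shows "F4 \<in> (V::'k::field_char_0 fn set)"
proof -
  have "(\<lambda>T Z. (-2) * comb3 B4 (rho3 (Em 1 0 0 0 1 0) b) T Z
            + comb3 B4 (rho3 (Em 2 0 0 0 1 0) b) T Z) \<in> V"
    by (rule L4[OF V b]) (auto intro!: GL_Em)
  then show ?thesis using useL[OF V _ E4_0 p] by blast
qed

lemma E4_1: "(-2) * comb3 B4 (rho3 (Em 1 0 0 0 0 1) b) T Z + comb3 B4 (rho3 (Em 2 0 0 0 0 1) b) T Z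
   = 4 * c4a b 1 3 * (F4 T Z :: 'k::field_char_0)"
  unfolding R4 F4_eq c4a_def c4b_def c4c_def rho3_def s3 by (simp add: Em_def field_simps)

lemma M4_1: assumes V: "gl_submodule V" and b: "comb3 B4 b \<in> V" and p: "4 * c4a b 1 3 \<noteq> 0"
  shows "F4 \<in> (V::'k::field_char_0 fn set)"
proof -
  have "(\<lambda>T Z. (-2) * comb3 B4 (rho3 (Em 1 0 0 0 0 1) b) T Z
            + comb3 B4 (rho3 (Em 2 0 0 0 0 1) b) T Z) \<in> V"
    by (rule L4[OF V b]) (auto intro!: GL_Em)
  then show ?thesis using useL[OF V _ E4_1 p] by blast
qed

lemma E4_2: "(-2) * comb3 B4 (rho3 (Em 0 1 0 1 0 0) b) T Z + comb3 B4 (rho3 (Em 0 2 0 1 0 0) b) T Z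
   = 4 * c4a b 2 1 * (F4 T Z :: 'k::field_char_0)"
  unfolding R4 F4_eq c4a_def c4b_def c4c_def rho3_def s3 by (simp add: Em_def field_simps)

lemma M4_2: assumes V: "gl_submodule V" and b: "comb3 B4 b \<in> V" and p: "4 * c4a b 2 1 \<noteq> 0"
  shows "F4 \<in> (V::'k::field_char_0 fn set)"
proof -
  have "(\<lambda>T Z. (-2) * comb3 B4 (rho3 (Em 0 1 0 1 0 0) b) T Z
            + comb3 B4 (rho3 (Em 0 2 0 1 0 0) b) T Z) \<in> V"
    by (rule L4[OF V b]) (auto intro!: GL_Em)
  then show ?thesis using useL[OF V _ E4_2 p] by blast
qed

lemma E4_3: "(-2) * comb3 B4 (rho3 (Em 0 1 0 0 0 1) b) T Z + comb3 B4 (rho3 (Em 0 2 0 0 0 1) b) T Z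
   = 4 * c4a b 2 3 * (F4 T Z :: 'k::field_char_0)"
  unfolding R4 F4_eq c4a_def c4b_def c4c_def rho3_def s3 by (simp add: Em_def field_simps)

lemma M4_3: assumes V: "gl_submodule V" and b: "comb3 B4 b \<in> V" and p: "4 * c4a b 2 3 \<noteq> 0"
  shows "F4 \<in> (V::'k::field_char_0 fn set)"
proof -
  have "(\<lambda>T Z. (-2) * comb3 B4 (rho3 (Em 0 1 0 0 0 1) b) T Z
            + comb3 B4 (rho3 (Em 0 2 0 0 0 1) b) T Z) \<in> V"
    by (rule L4[OF V b]) (auto intro!: GL_Em)
  then show ?thesis using useL[OF V _ E4_3 p] by blast
qed

lemma E4_4: "(-2) * comb3 B4 (rho3 (Em 0 0 1 1 0 0) b) T Z + comb3 B4 (rho3 (Em 0 0 2 1 0 0) b) T Z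
   = 4 * c4a b 3 1 * (F4 T Z :: 'k::field_char_0)"
  unfolding R4 F4_eq c4a_def c4b_def c4c_def rho3_def s3 by (simp add: Em_def field_simps)

lemma M4_4: assumes V: "gl_submodule V" and b: "comb3 B4 b \<in> V" and p: "4 * c4a b 3 1 \<noteq> 0"
  shows "F4 \<in> (V::'k::field_char_0 fn set)"
proof -
  have "(\<lambda>T Z. (-2) * comb3 B4 (rho3 (Em 0 0 1 1 0 0) b) T Z
            + comb3 B4 (rho3 (Em 0 0 2 1 0 0) b) T Z) \<in> V"
    by (rule L4[OF V b]) (auto intro!: GL_Em)
  then show ?thesis using useL[OF V _ E4_4 p] by blast
qed

lemma E4_5: "(-2) * comb3 B4 (rho3 (Em 0 0 1 0 1 0) b) T Z + comb3 B4 (rho3 (Em 0 0 2 0 1 0) b) T Z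
   = 4 * c4a b 3 2 * (F4 T Z :: 'k::field_char_0)"
  unfolding R4 F4_eq c4a_def c4b_def c4c_def rho3_def s3 by (simp add: Em_def field_simps)

lemma M4_5: assumes V: "gl_submodule V" and b: "comb3 B4 b \<in> V" and p: "4 * c4a b 3 2 \<noteq> 0"
  shows "F4 \<in> (V::'k::field_char_0 fn set)"
proof -
  have "(\<lambda>T Z. (-2) * comb3 B4 (rho3 (Em 0 0 1 0 1 0) b) T Z
            + comb3 B4 (rho3 (Em 0 0 2 0 1 0) b) T Z) \<in> V"
    by (rule L4[OF V b]) (auto intro!: GL_Em)
  then show ?thesis using useL[OF V _ E4_5 p] by blast
qed

lemma E4_6: "(-2) * comb3 B4 (rho3 (Em 1 1 0 0 0 1) b) T Z + comb3 B4 (rho3 (Em 2 2 0 0 0 1) b) T Z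
   = 4 * (c4a b 1 3 + c4a b 2 3 + c4b b - c4c b / 2) * (F4 T Z :: 'k::field_char_0)"
  unfolding R4 F4_eq c4a_def c4b_def c4c_def rho3_def s3 by (simp add: Em_def field_simps)

lemma M4_6: assumes V: "gl_submodule V" and b: "comb3 B4 b \<in> V" and p: "4 * (c4a b 1 3 + c4a b 2 3 + c4b b - c4c b / 2) \<noteq> 0"
  shows "F4 \<in> (V::'k::field_char_0 fn set)"
proof -
  have "(\<lambda>T Z. (-2) * comb3 B4 (rho3 (Em 1 1 0 0 0 1) b) T Z
            + comb3 B4 (rho3 (Em 2 2 0 0 0 1) b) T Z) \<in> V"
    by (rule L4[OF V b]) (auto intro!: GL_Em)
  then show ?thesis using useL[OF V _ E4_6 p] by blast
qed

lemma E4_7: "(-2) * comb3 B4 (rho3 (Em 1 0 1 0 1 0) b) T Z + comb3 B4 (rho3 (Em 2 0 2 0 1 0) b) T Z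
   = 4 * (c4a b 1 2 + c4a b 3 2 + c4c b - c4b b / 2) * (F4 T Z :: 'k::field_char_0)"
  unfolding R4 F4_eq c4a_def c4b_def c4c_def rho3_def s3 by (simp add: Em_def field_simps)

lemma M4_7: assumes V: "gl_submodule V" and b: "comb3 B4 b \<in> V" and p: "4 * (c4a b 1 2 + c4a b 3 2 + c4c b - c4b b / 2) \<noteq> 0"
  shows "F4 \<in> (V::'k::field_char_0 fn set)"
proof -
  have "(\<lambda>T Z. (-2) * comb3 B4 (rho3 (Em 1 0 1 0 1 0) b) T Z
            + comb3 B4 (rho3 (Em 2 0 2 0 1 0) b) T Z) \<in> V"
    by (rule L4[OF V b]) (auto intro!: GL_Em)
  then show ?thesis using useL[OF V _ E4_7 p] by blast
qed

lemma key4: assumes V: "gl_submodule V" and h: "h \<in> V" "h \<in> range (comb3 B4)" "h \<noteq> (\<lambda>T Z. 0)"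
  shows "F4 \<in> (V::'k::field_char_0 fn set)"
proof -
  obtain b where hb: "h = comb3 B4 b" using h(2) by auto
  have b: "comb3 B4 b \<in> V" using h(1) hb by simp
  show ?thesis
  proof (cases "c4a b 1 2 \<noteq> 0 \<or> c4a b 1 3 \<noteq> 0 \<or> c4a b 2 1 \<noteq> 0 \<or> c4a b 2 3 \<noteq> 0 \<or> c4a b 3 1 \<noteq> 0 \<or> c4a b 3 2 \<noteq> 0")
    case True then show ?thesis using M4_0[OF V b] M4_1[OF V b] M4_2[OF V b] M4_3[OF V b] M4_4[OF V b] M4_5[OF V b] by auto
  next
    case False
    then have z: "c4a b 1 2 = 0" "c4a b 1 3 = 0" "c4a b 2 1 = 0" "c4a b 2 3 = 0" "c4a b 3 1 = 0" "c4a b 3 2 = 0" by auto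
    show ?thesis
    proof (cases "c4b b - c4c b / 2 \<noteq> 0 \<or> c4c b - c4b b / 2 \<noteq> 0")
      case True
      then consider "c4b b - c4c b / 2 \<noteq> 0" | "c4c b - c4b b / 2 \<noteq> 0" by blast
      then show ?thesis
      proof cases
        case 1
        have e: "4 * (c4a b 1 3 + c4a b 2 3 + c4b b - c4c b / 2) = 4 * (c4b b - c4c b / 2)" using z by simp
        have "4 * (c4b b - c4c b / 2) \<noteq> (0::'k)" using 1 by (simp only: mult_eq_0_iff de_Morgan_disj) simp
        then have p: "4 * (c4a b 1 3 + c4a b 2 3 + c4b b - c4c b / 2) \<noteq> 0" unfolding e .
        show ?thesis by (rule M4_6[OF V b p])
      next
        case 2
        have e: "4 * (c4a b 1 2 + c4a b 3 2 + c4c b - c4b b / 2) = 4 * (c4c b - c4b b / 2)" using z by simp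
        have "4 * (c4c b - c4b b / 2) \<noteq> (0::'k)" using 2 by (simp only: mult_eq_0_iff de_Morgan_disj) simp
        then have p: "4 * (c4a b 1 2 + c4a b 3 2 + c4c b - c4b b / 2) \<noteq> 0" unfolding e .
        show ?thesis by (rule M4_7[OF V b p])
      qed
    next
      case False
      then have hh: "c4b b * 2 = c4c b" "c4c b * 2 = c4b b" by (auto simp: field_simps)
      have x4: "c4b b * 4 = c4b b"
      proof -
        have "c4b b * 4 = (c4b b * 2) * (2::'k)" by simp
        also have "\<dots> = c4c b * 2" using hh(1) by simp
        also have "\<dots> = c4b b" using hh(2) by simp
        finally show ?thesis .
      qed
      have "c4b b * 3 = c4b b * 4 - c4b b" by (simp add: algebra_simps)
      also have "\<dots> = 0" using x4 by simp
      finally have "c4b b * 3 = (0::'k)" .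
      then have "c4b b = 0" by simp
      then
      have "c4b b = 0 \<and> c4c b = 0" using hh by simp
      then have "h = (\<lambda>T Z. 0)" unfolding hb by (intro ext) (simp only: R4 z, simp)
      with h(3) show ?thesis by simp
    qed
  qed
qed

lemma col_alg:
  fixes a b c d e f g h i :: "'k::field"
  assumes "a*a + b*b + c*c = 1" "d*d + e*e + f*f = 1" "g*g + h*h + i*i = 1"
    "a*d + b*e + c*f = 0" "a*g + b*h + c*i = 0" "d*g + e*h + f*i = 0"
    "a * (e * i - f * h) - b * (d * i - f * g) + c * (d * h - e * g) = 1"
  shows "a*a + d*d + g*g = 1" "b*b + e*e + h*h = 1" "c*c + f*f + i*i = 1"
    "a*b + d*e + g*h = 0" "a*c + d*f + g*i = 0" "b*c + e*f + h*i = 0"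
  using assms by algebra+

lemma SO3_row: "SO3 g \<Longrightarrow> a \<in> {1..3} \<Longrightarrow> b \<in> {1..3} \<Longrightarrow> (\<Sum>l = 1..3. g a l * g b l) = (if a = b then 1 else 0)"
  unfolding SO3_def by blast

lemma SO3_col: assumes g: "SO3 (g::nat \<Rightarrow> nat \<Rightarrow> 'k::field)" and ab: "a \<in> {1..3}" "b \<in> {1..3}"
  shows "(\<Sum>l = 1..3. g l a * g l b) = (if a = b then 1 else 0)"
proof -
  have r: "g 1 1 * g 1 1 + g 1 2 * g 1 2 + g 1 3 * g 1 3 = 1"
      "g 2 1 * g 2 1 + g 2 2 * g 2 2 + g 2 3 * g 2 3 = 1"
      "g 3 1 * g 3 1 + g 3 2 * g 3 2 + g 3 3 * g 3 3 = 1"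
      "g 1 1 * g 2 1 + g 1 2 * g 2 2 + g 1 3 * g 2 3 = 0"
      "g 1 1 * g 3 1 + g 1 2 * g 3 2 + g 1 3 * g 3 3 = 0"
      "g 2 1 * g 3 1 + g 2 2 * g 3 2 + g 2 3 * g 3 3 = 0"
    using SO3_row[OF g, of 1 1, unfolded s3] SO3_row[OF g, of 2 2, unfolded s3] SO3_row[OF g, of 3 3, unfolded s3]
      SO3_row[OF g, of 1 2, unfolded s3] SO3_row[OF g, of 1 3, unfolded s3] SO3_row[OF g, of 2 3, unfolded s3] by simp_all
  have d: "g 1 1 * (g 2 2 * g 3 3 - g 2 3 * g 3 2) - g 1 2 * (g 2 1 * g 3 3 - g 2 3 * g 3 1)
          + g 1 3 * (g 2 1 * g 3 2 - g 2 2 * g 3 1) = 1"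
    using g unfolding SO3_def det3_def by simp
  note c = col_alg[OF r d]
  from ab have "a = 1 \<or> a = 2 \<or> a = 3" "b = 1 \<or> b = 2 \<or> b = 3" by auto
  then show ?thesis using c by (auto simp: s3 s3b algebra_simps)
qed

lemma conj_skew: "conj g (tmat T k) j i = - conj g (tmat T k) i j"
  by (simp add: conj_def s3 s3b tmat_def algebra_simps)

lemma tmat_conj: "tmat (\<lambda>k i j. conj g (tmat T k) i j) k = conj g (tmat (T::'k::field_char_0 tcoords) k)"
proof -
  have "tmat (\<lambda>k i j. conj g (tmat T k) i j) k i j = conj g (tmat T k) i j" for i j
  proof (cases "i < j")
    case True then show ?thesis by (simp add: tmat_def)
  next
    case False
    show ?thesis
    proof (cases "j < i")
      case True then show ?thesis using False by (simp add: tmat_def conj_skew[of g T k j i])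
    next
      case False2: False
      then have "i = j" using False by simp
      moreover have "conj g (tmat T k) i i = (0::'k)"
        using conj_skew[of g T k i i] by simp
      ultimately show ?thesis by (simp add: tmat_def)
    qed
  qed
  then show ?thesis by (intro ext)
qed

lemma umat_alt: "umat Z i j = (Z i j - Z j i) / 2"
  by (auto simp: umat_def field_simps)

lemma umat_conj: "umat (conj g Z) = conj g (umat (Z::nat \<Rightarrow> nat \<Rightarrow> 'k::field_char_0))"
  by (intro ext) (simp add: umat_alt conj_def s3 s3b field_simps)

lemma mm_conj_expand: "mm (conj g A) (conj g B) i j =
  (\<Sum>a=1..3. \<Sum>b=1..3. \<Sum>c=1..3. \<Sum>d=1..3. g i a * A a b * (\<Sum>l=1..3. g l b * g l c) * B c d * g j d)"
  by (simp add: mm_def conj_def s3 s3b algebra_simps)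


lemma mm_conj: assumes g: "SO3 (g::nat \<Rightarrow> nat \<Rightarrow> 'k::field)"
  shows "mm (conj g A) (conj g B) = conj g (mm A B)"
proof (intro ext)
  fix i j
  have "mm (conj g A) (conj g B) i j =
    (\<Sum>a=1..3. \<Sum>b=1..3. \<Sum>c=1..3. \<Sum>d=1..3. g i a * A a b * (\<Sum>l=1..3. g l b * g l c) * B c d * g j d)"
    by (rule mm_conj_expand)
  also have "\<dots> = (\<Sum>a=1..3. \<Sum>b=1..3. \<Sum>c=1..3. \<Sum>d=1..3. g i a * A a b * (if b = c then 1 else 0) * B c d * g j d)"
    by (intro sum.cong refl) (simp only: SO3_col[OF g])
  also have "\<dots> = conj g (mm A B) i j"
    by (simp add: conj_def mm_def s3 s3b algebra_simps)
  finally show "mm (conj g A) (conj g B) i j = conj g (mm A B) i j" .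
qed

lemma msub_conj: "msub (conj g A) (conj g B) = conj g (msub A B)"
  by (intro ext) (simp add: conj_def msub_def s3 s3b algebra_simps)

lemma mcomm_conj: "SO3 (g::nat \<Rightarrow> nat \<Rightarrow> 'k::field) \<Longrightarrow> mcomm (conj g A) (conj g B) = conj g (mcomm A B)"
  by (simp add: mcomm_def mm_conj msub_conj)

lemma mtr_conj: assumes g: "SO3 (g::nat \<Rightarrow> nat \<Rightarrow> 'k::field)" shows "mtr (conj g M) = mtr M"
proof -
  have "mtr (conj g M) = (\<Sum>a=1..3. \<Sum>b=1..3. M a b * (\<Sum>i=1..3. g i a * g i b))"
    by (simp add: mtr_def conj_def s3 s3b algebra_simps)
  also have "\<dots> = (\<Sum>a=1..3. \<Sum>b=1..3. M a b * (if a = b then 1 else 0))"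
    by (intro sum.cong refl) (simp only: SO3_col[OF g])
  also have "\<dots> = mtr M" by (simp add: mtr_def s3 s3b)
  finally show ?thesis .
qed

lemma smat_alt: "smat Z i j = (Z i j + Z j i) / 2 - (if i = j then (Z 1 1 + Z 2 2 + Z 3 3) / 3 else 0)"
  by (auto simp: smat_def field_simps)

lemma smat_conj: assumes g: "SO3 (g::nat \<Rightarrow> nat \<Rightarrow> 'k::field_char_0)" and ij: "i \<in> {1..3}" "j \<in> {1..3}"
  shows "smat (conj g Z) i j = conj g (smat Z) i j"
proof -
  have tr: "conj g Z 1 1 + conj g Z 2 2 + conj g Z 3 3 = Z 1 1 + Z 2 2 + Z 3 3"
    using mtr_conj[OF g, of Z] unfolding mtr_def s3 by simp
  have e1: "conj g (smat Z) i j = (\<Sum>a=1..3. \<Sum>b=1..3. g i a * ((Z a b + Z b a) / 2) * g j b)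
      - (Z 1 1 + Z 2 2 + Z 3 3) / 3 * (\<Sum>a=1..3. g i a * g j a)"
    by (simp add: conj_def smat_alt s3 s3b algebra_simps diff_divide_distrib add_divide_distrib)
  have e2: "(\<Sum>a=1..3. \<Sum>b=1..3. g i a * ((Z a b + Z b a) / 2) * g j b) = (conj g Z i j + conj g Z j i) / 2"
    by (simp add: conj_def s3 s3b field_simps)
  have e3: "smat (conj g Z) i j = (conj g Z i j + conj g Z j i) / 2 - (if i = j then (Z 1 1 + Z 2 2 + Z 3 3) / 3 else 0)"
    unfolding smat_alt tr ..
  show ?thesis unfolding e1 e2 e3 SO3_row[OF g ij] by simp
qed

lemma mtr_mm_cong: "(\<And>i j. i \<in> {1..3} \<Longrightarrow> j \<in> {1..3} \<Longrightarrow> B i j = B' i j) \<Longrightarrow> mtr (mm X B) = mtr (mm X B')"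
  unfolding mtr_def mm_def by (intro sum.cong refl) auto

definition F1 :: "'k::field_char_0 fn" where "F1 = (\<lambda>T Z. mtr (mm (tmat T 1) (umat Z)))"
definition F2 :: "'k::field_char_0 fn" where "F2 = (\<lambda>T Z. mtr (mm (mm (tmat T 1) (tmat T 2)) (umat Z)))"
definition F3 :: "'k::field_char_0 fn" where "F3 = (\<lambda>T Z. mtr (mm (mm (tmat T 1) (tmat T 1)) (smat Z)))"

lemma inv_F1: "SO3_invariant F1"
  unfolding SO3_invariant_def F1_def by (simp add: tmat_conj umat_conj mm_conj mtr_conj)
lemma inv_F2: "SO3_invariant F2"
  unfolding SO3_invariant_def F2_def by (simp add: tmat_conj umat_conj mm_conj mtr_conj)
lemma inv_F3: "SO3_invariant (F3::'k::field_char_0 fn)"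
  unfolding SO3_invariant_def F3_def
proof (intro allI impI)
  fix g T Z assume g: "SO3 (g::nat \<Rightarrow> nat \<Rightarrow> 'k)"
  have "mtr (mm (mm (tmat (\<lambda>k. conj g (tmat T k)) 1) (tmat (\<lambda>k. conj g (tmat T k)) 1)) (smat (conj g Z)))
     = mtr (mm (mm (conj g (tmat T 1)) (conj g (tmat T 1))) (conj g (smat Z)))"
    unfolding tmat_conj[unfolded] by (rule mtr_mm_cong) (simp add: smat_conj[OF g])
  also have "\<dots> = mtr (mm (mm (tmat T 1) (tmat T 1)) (smat Z))"
    by (simp add: mm_conj[OF g] mtr_conj[OF g])
  finally show "mtr (mm (mm (tmat (\<lambda>k. conj g (tmat T k)) 1) (tmat (\<lambda>k. conj g (tmat T k)) 1)) (smat (conj g Z)))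
     = mtr (mm (mm (tmat T 1) (tmat T 1)) (smat Z))" .
qed
lemma inv_F4: "SO3_invariant (F4::'k::field_char_0 fn)"
  unfolding SO3_invariant_def F4_def
proof (intro allI impI)
  fix g T Z assume g: "SO3 (g::nat \<Rightarrow> nat \<Rightarrow> 'k)"
  have "mtr (mm (mcomm (mm (tmat (\<lambda>k. conj g (tmat T k)) 1) (tmat (\<lambda>k. conj g (tmat T k)) 1)) (tmat (\<lambda>k. conj g (tmat T k)) 2)) (smat (conj g Z)))
     = mtr (mm (mcomm (mm (conj g (tmat T 1)) (conj g (tmat T 1))) (conj g (tmat T 2))) (conj g (smat Z)))"
    unfolding tmat_conj[unfolded] by (rule mtr_mm_cong) (simp add: smat_conj[OF g])
  also have "\<dots> = mtr (mm (mcomm (mm (tmat T 1) (tmat T 1)) (tmat T 2)) (smat Z))"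
    by (simp add: mm_conj[OF g] mcomm_conj[OF g] mtr_conj[OF g])
  finally show "mtr (mm (mcomm (mm (tmat (\<lambda>k. conj g (tmat T k)) 1) (tmat (\<lambda>k. conj g (tmat T k)) 1)) (tmat (\<lambda>k. conj g (tmat T k)) 2)) (smat (conj g Z)))
     = mtr (mm (mcomm (mm (tmat T 1) (tmat T 1)) (tmat T 2)) (smat Z))" .
qed

lemma useF: assumes V: "gl_submodule V" and A: "A \<in> V" and e: "\<And>T Z. A T Z = \<psi> * F T Z" and p: "\<psi> \<noteq> 0"
  shows "F \<in> (V::'k::field_char_0 fn set)"
proof -
  have "(\<lambda>T Z. \<psi> * F T Z) \<in> V" using A e by (rule sub_cong)
  then show ?thesis using sub_unsmult[OF V] p by blast
qed


lemma F1_eq: "F1 T Z = B1 1 T Z" unfolding F1_def by (rule f1_eq)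
lemma F2_eq: "F2 T Z = B2 1 2 T Z" by (simp add: F2_def mtr_mm_mm B2_def)
lemma F3_eq: "F3 T Z = B3 1 1 T Z" by (simp add: F3_def mtr_mm_mm B3_def)

lemma GLs: "c \<in> {2,3,4,5} \<Longrightarrow> GL3 (Ec (Em 1 0 0 0 0 0) (c::'k::field_char_0))"
  "c \<in> {2,3,4,5} \<Longrightarrow> GL3 (Ec (Em 0 1 0 0 0 0) (c::'k::field_char_0))"
  "c \<in> {2,3,4,5} \<Longrightarrow> GL3 (Ec (Em 0 0 1 0 0 0) (c::'k::field_char_0))"
  "c \<in> {2,3,4,5} \<Longrightarrow> GL3 (Ec (Em 1 1 0 0 0 0) (c::'k::field_char_0))"
  "c \<in> {2,3,4,5} \<Longrightarrow> GL3 (Ec (Em 1 0 1 0 0 0) (c::'k::field_char_0))"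
  "c \<in> {2,3,4,5} \<Longrightarrow> GL3 (Ec (Em 0 1 1 0 0 0) (c::'k::field_char_0))"
  "c \<in> {2,3,4,5} \<Longrightarrow> GL3 (Ec (Em 1 0 0 0 1 0) (c::'k::field_char_0))"
  "c \<in> {2,3,4,5} \<Longrightarrow> GL3 (Ec (Em 1 0 0 0 0 1) (c::'k::field_char_0))"
  "c \<in> {2,3,4,5} \<Longrightarrow> GL3 (Ec (Em 0 1 0 0 0 1) (c::'k::field_char_0))"
  by (auto intro!: GL_Em)

lemma key1: assumes V: "gl_submodule V" and h: "h \<in> V" "h \<in> range (comb1 B1)" "h \<noteq> (\<lambda>T Z. 0)"
  shows "F1 \<in> (V::'k::field_char_0 fn set)"
proof -
  obtain b where hb: "h = comb1 B1 b" using h(2) by auto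
  have b: "comb1 B1 b \<in> V" using h(1) hb by simp
  have m: "comb1 B1 (rho1 (Em 1 0 0 0 0 0) b) \<in> V" "comb1 B1 (rho1 (Em 0 1 0 0 0 0) b) \<in> V"
     "comb1 B1 (rho1 (Em 0 0 1 0 0 0) b) \<in> V"
    by (rule interp1[OF V cov1_B1 b]; simp add: GLs)+
  have e: "\<And>T Z. comb1 B1 (rho1 (Em 1 0 0 0 0 0) b) T Z = b 1 * F1 T Z"
     "\<And>T Z. comb1 B1 (rho1 (Em 0 1 0 0 0 0) b) T Z = b 2 * F1 T Z"
     "\<And>T Z. comb1 B1 (rho1 (Em 0 0 1 0 0 0) b) T Z = b 3 * F1 T Z"
    by (simp_all add: comb1_def rho1_def s3 s3b Em_def F1_eq)
  show ?thesis
  proof (cases "b 1 \<noteq> 0 \<or> b 2 \<noteq> 0 \<or> b 3 \<noteq> 0")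
    case True then show ?thesis using useF[OF V m(1) e(1)] useF[OF V m(2) e(2)] useF[OF V m(3) e(3)] by blast
  next
    case False
    then have "h = (\<lambda>T Z. 0)" unfolding hb by (intro ext) (simp add: comb1_def s3 s3b)
    with h(3) show ?thesis by simp
  qed
qed

lemma key2: assumes V: "gl_submodule V" and h: "h \<in> V" "h \<in> range (comb2 B2)" "h \<noteq> (\<lambda>T Z. 0)"
  shows "F2 \<in> (V::'k::field_char_0 fn set)"
proof -
  obtain b where hb: "h = comb2 B2 b" using h(2) by auto
  have b: "comb2 B2 b \<in> V" using h(1) hb by simp
  have m: "comb2 B2 (rho2 (Em 1 0 0 0 1 0) b) \<in> V" "comb2 B2 (rho2 (Em 1 0 0 0 0 1) b) \<in> V"
     "comb2 B2 (rho2 (Em 0 1 0 0 0 1) b) \<in> V"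
    by (rule interp2[OF V cov2_B2 b]; simp add: GLs)+
  note r = B2_diag B2_anti[of 2 1] B2_anti[of 3 1] B2_anti[of 3 2]
  have e: "\<And>T Z. comb2 B2 (rho2 (Em 1 0 0 0 1 0) b) T Z = (b 1 2 - b 2 1) * F2 T Z"
     "\<And>T Z. comb2 B2 (rho2 (Em 1 0 0 0 0 1) b) T Z = (b 1 3 - b 3 1) * F2 T Z"
     "\<And>T Z. comb2 B2 (rho2 (Em 0 1 0 0 0 1) b) T Z = (b 2 3 - b 3 2) * F2 T Z"
    unfolding comb2_def rho2_def s3 F2_eq by (simp_all only: r, simp_all add: Em_def algebra_simps)
  show ?thesis
  proof (cases "b 1 2 - b 2 1 \<noteq> 0 \<or> b 1 3 - b 3 1 \<noteq> 0 \<or> b 2 3 - b 3 2 \<noteq> 0")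
    case True then show ?thesis using useF[OF V m(1) e(1)] useF[OF V m(2) e(2)] useF[OF V m(3) e(3)] by blast
  next
    case False
    then have "h = (\<lambda>T Z. 0)" unfolding hb comb2_def s3 by (intro ext) (simp only: r, simp add: algebra_simps)
    with h(3) show ?thesis by simp
  qed
qed

lemma key3: assumes V: "gl_submodule V" and h: "h \<in> V" "h \<in> range (comb2 B3)" "h \<noteq> (\<lambda>T Z. 0)"
  shows "F3 \<in> (V::'k::field_char_0 fn set)"
proof -
  obtain b where hb: "h = comb2 B3 b" using h(2) by auto
  have b: "comb2 B3 b \<in> V" using h(1) hb by simp
  have m: "comb2 B3 (rho2 (Em 1 0 0 0 0 0) b) \<in> V" "comb2 B3 (rho2 (Em 0 1 0 0 0 0) b) \<in> V"
     "comb2 B3 (rho2 (Em 0 0 1 0 0 0) b) \<in> V" "comb2 B3 (rho2 (Em 1 1 0 0 0 0) b) \<in> V"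
     "comb2 B3 (rho2 (Em 1 0 1 0 0 0) b) \<in> V" "comb2 B3 (rho2 (Em 0 1 1 0 0 0) b) \<in> V"
    by (rule interp2[OF V cov2_B3 b]; simp add: GLs)+
  note r = B3_sym[of 2 1] B3_sym[of 3 1] B3_sym[of 3 2]
  have e: "\<And>T Z. comb2 B3 (rho2 (Em 1 0 0 0 0 0) b) T Z = b 1 1 * F3 T Z"
     "\<And>T Z. comb2 B3 (rho2 (Em 0 1 0 0 0 0) b) T Z = b 2 2 * F3 T Z"
     "\<And>T Z. comb2 B3 (rho2 (Em 0 0 1 0 0 0) b) T Z = b 3 3 * F3 T Z"
     "\<And>T Z. comb2 B3 (rho2 (Em 1 1 0 0 0 0) b) T Z = (b 1 1 + b 1 2 + b 2 1 + b 2 2) * F3 T Z"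
     "\<And>T Z. comb2 B3 (rho2 (Em 1 0 1 0 0 0) b) T Z = (b 1 1 + b 1 3 + b 3 1 + b 3 3) * F3 T Z"
     "\<And>T Z. comb2 B3 (rho2 (Em 0 1 1 0 0 0) b) T Z = (b 2 2 + b 2 3 + b 3 2 + b 3 3) * F3 T Z"
    unfolding comb2_def rho2_def s3 F3_eq by (simp_all add: Em_def algebra_simps)
  show ?thesis
  proof (cases "b 1 1 \<noteq> 0 \<or> b 2 2 \<noteq> 0 \<or> b 3 3 \<noteq> 0")
    case True then show ?thesis using useF[OF V m(1) e(1)] useF[OF V m(2) e(2)] useF[OF V m(3) e(3)] by blast
  next
    case False
    then have z: "b 1 1 = 0" "b 2 2 = 0" "b 3 3 = 0" by auto
    show ?thesis
    proof (cases "b 1 2 + b 2 1 \<noteq> 0 \<or> b 1 3 + b 3 1 \<noteq> 0 \<or> b 2 3 + b 3 2 \<noteq> 0")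
      case True then show ?thesis using useF[OF V m(4) e(4)] useF[OF V m(5) e(5)] useF[OF V m(6) e(6)] z by auto
    next
      case False
      then have s: "b 1 2 + b 2 1 = 0" "b 1 3 + b 3 1 = 0" "b 2 3 + b 3 2 = 0" by auto
      have "\<And>T Z. comb2 B3 b T Z = b 1 1 * B3 1 1 T Z + b 2 2 * B3 2 2 T Z + b 3 3 * B3 3 3 T Z
         + (b 1 2 + b 2 1) * B3 1 2 T Z + (b 1 3 + b 3 1) * B3 1 3 T Z + (b 2 3 + b 3 2) * B3 2 3 T Z"
        unfolding comb2_def s3 by (simp only: r) (simp add: algebra_simps)
      then have "h = (\<lambda>T Z. 0)" unfolding hb by (intro ext) (simp only: s z, simp)
      with h(3) show ?thesis by simp
    qed
  qed
qed

definition polyM :: "('k::comm_ring_1 tcoords \<Rightarrow> nat \<Rightarrow> nat \<Rightarrow> 'k) \<Rightarrow> bool" where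
  "polyM X \<longleftrightarrow> (\<forall>i\<in>{1..3}. \<forall>j\<in>{1..3}. (\<lambda>T. X T i j) \<in> polyT)"

lemma polyT_neg: "p \<in> polyT \<Longrightarrow> (\<lambda>T. - p T) \<in> polyT"
proof -
  assume "p \<in> polyT"
  then have "(\<lambda>T. (-1) * p T) \<in> polyT" using polyT.mult[OF polyT.const[of "-1"]] by blast
  then show ?thesis by simp
qed
lemma polyT_sub: assumes p: "p \<in> polyT" and q: "q \<in> polyT" shows "(\<lambda>T. p T - q T) \<in> polyT"
proof -
  have "(\<lambda>T. p T + - q T) \<in> polyT" by (rule polyT.add[OF p polyT_neg[OF q]])
  then show ?thesis by simp
qed

lemma polyM_tmat: assumes k: "k \<in> {1..3}" shows "polyM (\<lambda>T. tmat T k)"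
  unfolding polyM_def
proof (intro ballI)
  fix i j assume ij: "i \<in> {1..(3::nat)}" "j \<in> {1..(3::nat)}"
  consider "i < j" | "j < i" | "i = j" by arith
  then show "(\<lambda>T. tmat T k i j) \<in> polyT"
  proof cases
    case 1 then have e: "(\<lambda>T. tmat T k i j) = (\<lambda>T. T k i j)" by (simp add: tmat_def)
    have "(\<lambda>T. T k i j) \<in> polyT" using polyT.tvar[OF k, of i j] 1 ij by auto
    then show ?thesis unfolding e .
  next
    case 2 then have e: "(\<lambda>T. tmat T k i j) = (\<lambda>T. - T k j i)" by (auto simp: tmat_def)
    have "(\<lambda>T. - T k j i) \<in> polyT" using polyT_neg[OF polyT.tvar[OF k, of j i]] 2 ij by auto
    then show ?thesis unfolding e .
  next
    case 3 then have e: "(\<lambda>T. tmat T k i j) = (\<lambda>T. 0)" by (simp add: tmat_def)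
    show ?thesis unfolding e by (rule polyT.const)
  qed
qed

lemma polyM_mm: assumes A: "polyM A" and B: "polyM B" shows "polyM (\<lambda>T. mm (A T) (B T))"
  unfolding polyM_def
proof (intro ballI)
  fix i j assume ij: "i \<in> {1..(3::nat)}" "j \<in> {1..(3::nat)}"
  have a: "(\<lambda>T. A T i l) \<in> polyT" "(\<lambda>T. B T l j) \<in> polyT" if "l \<in> {1..3}" for l
    using A B ij that unfolding polyM_def by auto
  have "(\<lambda>T. A T i 1 * B T 1 j + A T i 2 * B T 2 j + A T i 3 * B T 3 j) \<in> polyT"
  proof -
    have m: "(\<lambda>T. A T i l * B T l j) \<in> polyT" if "l \<in> {1..3}" for l
      using polyT.mult[OF a(1)[OF that] a(2)[OF that]] .
    show ?thesis using polyT.add[OF polyT.add[OF m[of 1] m[of 2]] m[of 3]] by simp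
  qed
  then show "(\<lambda>T. mm (A T) (B T) i j) \<in> polyT" unfolding mm_def s3 .
qed

lemma polyM_msub: assumes A: "polyM A" and B: "polyM B" shows "polyM (\<lambda>T. msub (A T) (B T))"
  using A B unfolding polyM_def msub_def by (auto intro: polyT_sub)

lemma polyM_mcomm: assumes A: "polyM A" and B: "polyM B" shows "polyM (\<lambda>T. mcomm (A T) (B T))"
  unfolding mcomm_def by (intro polyM_msub polyM_mm A B)

lemma s23: "(\<Sum>j = 2..3. f j) = f 2 + f (3::nat)"
proof -
  have "{2..3::nat} = {2,3}" by auto
  then show ?thesis by simp
qed
lemma s23b: "(\<Sum>j = Suc (Suc 0)..3. f j) = f 2 + f (3::nat)"
proof -
  have "{Suc (Suc 0)..3::nat} = {2,3}" by auto
  then show ?thesis by simp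
qed
lemma s33: "(\<Sum>j = 3..3. f j) = f (3::nat)" by simp
lemma s43: "(\<Sum>j = (4::nat)..3. f j) = (0::'a::comm_monoid_add)" by simp

lemma umat_skew: "umat Z j i = - umat (Z::nat \<Rightarrow> nat \<Rightarrow> 'k::field_char_0) i j"
  by (simp add: umat_alt field_simps)
lemma umat_diag: "umat (Z::nat \<Rightarrow> nat \<Rightarrow> 'k::field_char_0) i i = 0"
  by (simp add: umat_alt)
lemma smat_symm: "smat Z j i = smat (Z::nat \<Rightarrow> nat \<Rightarrow> 'k::field_char_0) i j"
  by (simp add: smat_alt add.commute)

lemma rep_u: "mtr (mm X (umat Z)) = (\<Sum>i=1..3. \<Sum>j=i+1..3. (X j i - X i j) * umat (Z::nat \<Rightarrow> nat \<Rightarrow> 'k::field_char_0) i j)"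
proof -
  have "mtr (mm X (umat Z)) = X 1 1 * umat Z 1 1 + X 1 2 * umat Z 2 1 + X 1 3 * umat Z 3 1
     + X 2 1 * umat Z 1 2 + X 2 2 * umat Z 2 2 + X 2 3 * umat Z 3 2
     + X 3 1 * umat Z 1 3 + X 3 2 * umat Z 2 3 + X 3 3 * umat Z 3 3"
    unfolding mtr_def mm_def s3 by (simp only: add.assoc)
  also have "\<dots> = (X 2 1 - X 1 2) * umat Z 1 2 + (X 3 1 - X 1 3) * umat Z 1 3 + (X 3 2 - X 2 3) * umat Z 2 3"
    unfolding umat_skew[of Z 2 1] umat_skew[of Z 3 1] umat_skew[of Z 3 2] umat_diag by (simp add: algebra_simps)
  also have "\<dots> = (\<Sum>i=1..3. \<Sum>j=i+1..3. (X j i - X i j) * umat Z i j)"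
    unfolding s3 by (simp add: s23 s23b s33)
  finally show ?thesis .
qed

lemma rep_s: "mtr (mm X (smat Z)) = (\<Sum>i=1..3. \<Sum>j=i..3. (if i = j then X i i else X i j + X j i) * smat (Z::nat \<Rightarrow> nat \<Rightarrow> 'k::field_char_0) i j)"
proof -
  have "mtr (mm X (smat Z)) = X 1 1 * smat Z 1 1 + X 1 2 * smat Z 2 1 + X 1 3 * smat Z 3 1
     + X 2 1 * smat Z 1 2 + X 2 2 * smat Z 2 2 + X 2 3 * smat Z 3 2
     + X 3 1 * smat Z 1 3 + X 3 2 * smat Z 2 3 + X 3 3 * smat Z 3 3"
    unfolding mtr_def mm_def s3 by (simp only: add.assoc)
  also have "\<dots> = X 1 1 * smat Z 1 1 + X 2 2 * smat Z 2 2 + X 3 3 * smat Z 3 3 + (X 1 2 + X 2 1) * smat Z 1 2 + (X 1 3 + X 3 1) * smat Z 1 3 + (X 2 3 + X 3 2) * smat Z 2 3"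
    unfolding smat_symm[of Z 2 1] smat_symm[of Z 3 1] smat_symm[of Z 3 2] by (simp add: algebra_simps)
  also have "\<dots> = (\<Sum>i=1..3. \<Sum>j=i..3. (if i = j then X i i else X i j + X j i) * smat Z i j)"
    unfolding s3 by (simp add: s23 s33 algebra_simps)
  finally show ?thesis .
qed

lemma inC2_gen: assumes X: "polyM X" and inv: "SO3_invariant F" and F: "\<And>T Z. F T Z = mtr (mm (X T) (umat Z))"
  shows "in_C2 (F::'k::field_char_0 fn)"
  unfolding in_C2_def
proof (intro conjI exI[of _ "\<lambda>i j. if i \<in> {1..3} \<and> j \<in> {1..3} then (\<lambda>T. X T j i - X T i j) else (\<lambda>T. 0)"] allI)
  fix i j
  show "(if i \<in> {1..3} \<and> j \<in> {1..3} then (\<lambda>T. X T j i - X T i j) else (\<lambda>T. 0)) \<in> polyT"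
    using X unfolding polyM_def by (auto intro: polyT_sub polyT.const)
next
  fix T Z
  show "F T Z = (\<Sum>i = 1..3. \<Sum>j = i + 1..3. (if i \<in> {1..3} \<and> j \<in> {1..3} then (\<lambda>T. X T j i - X T i j) else (\<lambda>T. 0)) T * umat Z i j)"
    unfolding F rep_u by (intro sum.cong refl) auto
qed (rule inv)

lemma inC3_gen: assumes X: "polyM X" and inv: "SO3_invariant F" and F: "\<And>T Z. F T Z = mtr (mm (X T) (smat Z))"
  shows "in_C3 (F::'k::field_char_0 fn)"
  unfolding in_C3_def
proof (intro conjI exI[of _ "\<lambda>i j. if i \<in> {1..3} \<and> j \<in> {1..3} then (\<lambda>T. if i = j then X T i i else X T i j + X T j i) else (\<lambda>T. 0)"] allI)
  fix i j
  show "(if i \<in> {1..3} \<and> j \<in> {1..3} then (\<lambda>T. if i = j then X T i i else X T i j + X T j i) else (\<lambda>T. 0)) \<in> polyT"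
    using X unfolding polyM_def by (cases "i = j") (auto intro: polyT.add polyT.const)
next
  fix T Z
  show "F T Z = (\<Sum>i = 1..3. \<Sum>j = i..3. (if i \<in> {1..3} \<and> j \<in> {1..3} then (\<lambda>T. if i = j then X T i i else X T i j + X T j i) else (\<lambda>T. 0)) T * smat Z i j)"
    unfolding F rep_s by (intro sum.cong refl) auto
qed (rule inv)

lemma inC_F1: "in_C2 (F1::'k::field_char_0 fn)"
  by (rule inC2_gen[OF polyM_tmat inv_F1]) (auto simp: F1_def)
lemma inC_F2: "in_C2 (F2::'k::field_char_0 fn)"
  by (rule inC2_gen[OF polyM_mm[OF polyM_tmat polyM_tmat] inv_F2]) (auto simp: F2_def)
lemma inC_F3: "in_C3 (F3::'k::field_char_0 fn)"
  by (rule inC3_gen[OF polyM_mm[OF polyM_tmat polyM_tmat] inv_F3]) (auto simp: F3_def)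
lemma inC_F4: "in_C3 (F4::'k::field_char_0 fn)"
  by (rule inC3_gen[OF polyM_mcomm[OF polyM_mm[OF polyM_tmat polyM_tmat] polyM_tmat] inv_F4]) (auto simp: F4_def)

lemma p3: "(\<Prod>i = 1..3. f i) = f 1 * f 2 * f (3::nat)"
  by (simp add: eval_nat_numeral atLeastAtMostSuc_conv mult.commute mult.left_commute)

lemma tmat_scale: "tmat (\<lambda>k i j. c k * T k i j) k = (\<lambda>i j. c k * tmat T k i j)"
  by (intro ext) (simp add: tmat_def)
lemma mm_scal1: "mm (\<lambda>i j. a * A i j) B = (\<lambda>i j. a * mm A B i j)"
  by (intro ext) (simp add: mm_def sum_distrib_left mult.assoc)
lemma mm_scal2: "mm A (\<lambda>i j. a * B i j) = (\<lambda>i j. a * mm A B i j)"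
  by (intro ext) (simp add: mm_def sum_distrib_left mult.left_commute)
lemma mcomm_scal: "mcomm (\<lambda>i j. a * A i j) (\<lambda>i j. b * B i j) = (\<lambda>i j. (a * b) * mcomm A B i j)"
  by (intro ext) (simp add: mcomm_def msub_def mm_scal1 mm_scal2 algebra_simps)
lemma mcomm_scal1: "mcomm (\<lambda>i j. a * A i j) B = (\<lambda>i j. a * mcomm A B i j)"
  by (intro ext) (simp add: mcomm_def msub_def mm_scal1 mm_scal2 algebra_simps)
lemma mcomm_scal2: "mcomm A (\<lambda>i j. b * B i j) = (\<lambda>i j. b * mcomm A B i j)"
  by (intro ext) (simp add: mcomm_def msub_def mm_scal1 mm_scal2 algebra_simps)
lemma mtr_scal: "mtr (\<lambda>i j. a * A i j) = a * mtr A"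
  by (simp add: mtr_def sum_distrib_left)

lemma mh_F1: "multihom (F1::'k::field_char_0 fn) (wt 1 0 0)"
  unfolding multihom_def F1_def tmat_scale mm_scal1 mtr_scal p3 by (simp add: wt_def)
lemma mh_F2: "multihom (F2::'k::field_char_0 fn) (wt 1 1 0)"
  unfolding multihom_def F2_def tmat_scale mm_scal1 mm_scal2 mtr_scal p3 by (simp add: wt_def)
lemma mh_F3: "multihom (F3::'k::field_char_0 fn) (wt 2 0 0)"
  unfolding multihom_def F3_def tmat_scale mm_scal1 mm_scal2 mtr_scal p3 by (simp add: wt_def power2_eq_square)
lemma mh_F4: "multihom (F4::'k::field_char_0 fn) (wt 2 1 0)"
  unfolding multihom_def F4_def tmat_scale mm_scal1 mm_scal2 mcomm_scal1 mcomm_scal2 mtr_scal p3 by (simp add: wt_def power2_eq_square)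

definition e1 :: "nat \<Rightarrow> 'k::field_char_0" where "e1 l = (if l = 1 then 1 else 0)"
definition e2 :: "nat \<Rightarrow> nat \<Rightarrow> 'k::field_char_0" where "e2 l m = (if l = 1 \<and> m = 2 then 1 else 0)"
definition e3 :: "nat \<Rightarrow> nat \<Rightarrow> 'k::field_char_0" where "e3 l m = (if l = 1 \<and> m = 1 then 1 else 0)"
definition e4 :: "nat \<Rightarrow> nat \<Rightarrow> nat \<Rightarrow> 'k::field_char_0" where "e4 l m n = (if l = 1 \<and> m = 1 \<and> n = 2 then 1/2 else 0)"

lemma F1_comb: "F1 = comb1 B1 e1"
  by (intro ext) (simp add: comb1_def e1_def s3 s3b F1_eq)
lemma F2_comb: "F2 = comb2 B2 e2"
  by (intro ext) (simp add: comb2_def e2_def s3 s3b F2_eq)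
lemma F3_comb: "F3 = comb2 B3 e3"
  by (intro ext) (simp add: comb2_def e3_def s3 s3b F3_eq)
lemma F4_comb: "F4 = comb3 B4 e4"
  by (intro ext) (simp add: comb3_def e4_def s3 s3b F4_eq)

lemma unip: assumes "unipotent_upper g"
  shows "g 1 1 = 1" "g 2 2 = 1" "g 3 3 = 1" "g 2 1 = 0" "g 3 1 = 0" "g 3 2 = 0"
  using assms unfolding unipotent_upper_def by auto

lemma un_F1: "unipotent_upper g \<Longrightarrow> gl_act g (F1::'k::field_char_0 fn) = F1"
  unfolding F1_comb act1[OF cov1_B1]
  by (intro ext) (simp only: comb1_def rho1_def s3 unip, simp add: e1_def)
lemma un_F2: "unipotent_upper g \<Longrightarrow> gl_act g (F2::'k::field_char_0 fn) = F2"
  unfolding F2_comb act2[OF cov2_B2]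
  by (intro ext) (simp only: comb2_def rho2_def s3 unip B2_diag, simp add: e2_def)
lemma un_F3: "unipotent_upper g \<Longrightarrow> gl_act g (F3::'k::field_char_0 fn) = F3"
  unfolding F3_comb act2[OF cov2_B3]
  by (intro ext) (simp only: comb2_def rho2_def s3 unip, simp add: e3_def)
lemma un_F4: "unipotent_upper g \<Longrightarrow> gl_act g (F4::'k::field_char_0 fn) = F4"
  unfolding F4_comb act3[OF cov3_B4]
  by (intro ext) (simp only: comb3_def rho3_def s3 unip B4_ppp, simp add: e4_def)

lemma nz_F1: "(F1::'k::field_char_0 fn) \<noteq> (\<lambda>T Z. 0)"
proof
  assume a: "(F1::'k fn) = (\<lambda>T Z. 0)"
  have "F1 (\<lambda>k i j. if k = 1 \<and> i = 1 \<and> j = 2 then 1 else 0) (\<lambda>i j. if i = 1 \<and> j = 2 then 1 else 0) = (-1::'k)"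
    by (simp add: F1_def mtr_def mm_def s3 s3b tmat_def umat_def)
  then show False unfolding a by simp
qed

lemma nz_F2: "(F2::'k::field_char_0 fn) \<noteq> (\<lambda>T Z. 0)"
proof
  assume a: "(F2::'k fn) = (\<lambda>T Z. 0)"
  have "F2 (\<lambda>k i j. if (k = 1 \<and> i = 1 \<and> j = 2) \<or> (k = 2 \<and> i = 2 \<and> j = 3) then 1 else 0) (\<lambda>i j. if i = 1 \<and> j = 3 then 1 else 0) = (-1/2::'k)"
    by (simp add: F2_def mtr_def mm_def s3 s3b tmat_def umat_def)
  then show False unfolding a by simp
qed

lemma nz_F3: "(F3::'k::field_char_0 fn) \<noteq> (\<lambda>T Z. 0)"
proof
  assume a: "(F3::'k fn) = (\<lambda>T Z. 0)"
  have "F3 (\<lambda>k i j. if k = 1 \<and> i = 1 \<and> j = 2 then 1 else 0) (\<lambda>i j. if i = 1 \<and> j = 1 then 1 else 0) = (-1/3::'k)"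
    by (simp add: F3_def mtr_def mm_def s3 s3b tmat_def smat_def)
  then show False unfolding a by simp
qed

lemma nz_F4: "(F4::'k::field_char_0 fn) \<noteq> (\<lambda>T Z. 0)"
proof
  assume a: "(F4::'k fn) = (\<lambda>T Z. 0)"
  have "F4 (\<lambda>k i j. if (k = 1 \<and> i = 1 \<and> j = 2) \<or> (k = 2 \<and> i = 2 \<and> j = 3) then 1 else 0) (\<lambda>i j. if i = 2 \<and> j = 3 then 1 else 0) = (-1::'k)"
    by (simp add: F4_def mtr_def mm_def mcomm_def msub_def s3 s3b tmat_def smat_def)
  then show False unfolding a by simp
qed

lemma gen_F1: "generates_W3 (F1::'k::field_char_0 fn) (wt 1 0 0)"
  unfolding generates_W3_def hwv_def
  by (intro conjI allI impI nz_F1 mh_F1 irr_generic[OF nz_F1 self1[OF cov1_B1 F1_comb] cyc1[OF cov1_B1 F1_comb] key1]) (erule un_F1)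
lemma gen_F2: "generates_W3 (F2::'k::field_char_0 fn) (wt 1 1 0)"
  unfolding generates_W3_def hwv_def
  by (intro conjI allI impI nz_F2 mh_F2 irr_generic[OF nz_F2 self2[OF cov2_B2 F2_comb] cyc2[OF cov2_B2 F2_comb] key2]) (erule un_F2)
lemma gen_F3: "generates_W3 (F3::'k::field_char_0 fn) (wt 2 0 0)"
  unfolding generates_W3_def hwv_def
  by (intro conjI allI impI nz_F3 mh_F3 irr_generic[OF nz_F3 self2[OF cov2_B3 F3_comb] cyc2[OF cov2_B3 F3_comb] key3]) (erule un_F3)
lemma gen_F4: "generates_W3 (F4::'k::field_char_0 fn) (wt 2 1 0)"
  unfolding generates_W3_def hwv_def
  by (intro conjI allI impI nz_F4 mh_F4 irr_generic[OF nz_F4 self3[OF cov3_B4 F4_comb] cyc3[OF cov3_B4 F4_comb] key4]) (erule un_F4)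

theorem proposition5p3:
  shows "in_C2 (\<lambda>T Z. mtr (mm (tmat T 1) (umat Z)) :: 'k::field_char_0)
       \<and> generates_W3 (\<lambda>T Z. mtr (mm (tmat T 1) (umat Z)) :: 'k) (wt 1 0 0)
       \<and> in_C2 (\<lambda>T Z. mtr (mm (mm (tmat T 1) (tmat T 2)) (umat Z)) :: 'k)
       \<and> generates_W3 (\<lambda>T Z. mtr (mm (mm (tmat T 1) (tmat T 2)) (umat Z)) :: 'k) (wt 1 1 0)
       \<and> in_C3 (\<lambda>T Z. mtr (mm (mm (tmat T 1) (tmat T 1)) (smat Z)) :: 'k)
       \<and> generates_W3 (\<lambda>T Z. mtr (mm (mm (tmat T 1) (tmat T 1)) (smat Z)) :: 'k) (wt 2 0 0)
       \<and> in_C3 (\<lambda>T Z. mtr (mm (mcomm (mm (tmat T 1) (tmat T 1)) (tmat T 2)) (smat Z)) :: 'k)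
       \<and> generates_W3 (\<lambda>T Z. mtr (mm (mcomm (mm (tmat T 1) (tmat T 1)) (tmat T 2)) (smat Z)) :: 'k) (wt 2 1 0)"
proof -
  have h: "in_C2 (F1::'k fn) \<and> generates_W3 (F1::'k fn) (wt 1 0 0) \<and> in_C2 (F2::'k fn) \<and> generates_W3 (F2::'k fn) (wt 1 1 0)
    \<and> in_C3 (F3::'k fn) \<and> generates_W3 (F3::'k fn) (wt 2 0 0) \<and> in_C3 (F4::'k fn) \<and> generates_W3 (F4::'k fn) (wt 2 1 0)"
    by (intro conjI inC_F1 gen_F1 inC_F2 gen_F2 inC_F3 gen_F3 inC_F4 gen_F4)
  show ?thesis using h unfolding F1_def F2_def F3_def F4_def .
qed

end
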